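(* Let $X, Y \subseteq \omega$. There exists an embedding $\mathcal{K}_2^X \to \mathcal{B}^Y$ if and only if $X \le_T Y$.
   Context: A partial combinatory algebra (pca) is a set $A$ with a partial binary application $\cdot$ containing distinct elements $\mathrm{s},\mathrm{k}$ with $\mathrm{k}ab\downarrow = a$, $\mathrm{s}ab\downarrow$, and $\mathrm{s}abc \simeq (ac)(bc)$. Given pcas $\mathcal{A},\mathcal{B}$, an embedding $\mathcal{A}\hookrightarrow\mathcal{B}$ is an injection $f$ such that whenever $aa'\downarrow$ in $\mathcal{A}$, $f(a)f(a')\downarrow = f(aa')$. Kleene's second model $\mathcal{K}_2$ is taken with carrier $\omega^\omega$ and application $g\cdot h = \Phi^{g\oplus h}_{g(0)}$, where $\Phi_e$ is the $e$-th Turing functional and $g\cdot h$ is defined iff the function on the right is total. Van Oosten's sequential computation model $\mathcal{B}$ is the same definition but with carrier the set of partial functions $\omega\rightharpoonup\omega$ (application always defined). For $X\subseteq\omega$, $\mathcal{K}_2^X$ is the sub-pca of $X$-computable total functions and $\mathcal{B}^X$ the sub-pca of partial $X$-computable functions. *)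

theory Defs
  imports Main "HOL-Library.Nat_Bijection"
begin

datatype rf = Zero | Succ | Proj nat | Comp rf "rf list" | PrimRec rf rf | Mu rf | Oracle

definition arg :: "nat list \<Rightarrow> nat \<Rightarrow> nat" where
  "arg xs i = (if i < length xs then xs ! i else 0)"

text \<open>Big-step semantics relative to a partial oracle (queries to undefined
  points diverge, i.e. sequential computation).\<close>
inductive ev :: "(nat \<Rightarrow> nat option) \<Rightarrow> rf \<Rightarrow> nat list \<Rightarrow> nat \<Rightarrow> bool"
  for orc :: "nat \<Rightarrow> nat option" where
  ev_Zero: "ev orc Zero xs 0"
| ev_Succ: "ev orc Succ xs (Suc (arg xs 0))"
| ev_Proj: "ev orc (Proj i) xs (arg xs i)"
| ev_Comp: "list_all2 (\<lambda>g y. ev orc g xs y) gs ys \<Longrightarrow> ev orc f ys z \<Longrightarrow> ev orc (Comp f gs) xs z"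
| ev_PrimRec0: "arg xs 0 = 0 \<Longrightarrow> ev orc f (drop 1 xs) y \<Longrightarrow> ev orc (PrimRec f g) xs y"
| ev_PrimRecS: "arg xs 0 = Suc n \<Longrightarrow> ev orc (PrimRec f g) (n # drop 1 xs) y
     \<Longrightarrow> ev orc g (y # n # drop 1 xs) z \<Longrightarrow> ev orc (PrimRec f g) xs z"
| ev_Mu: "ev orc f (n # xs) 0 \<Longrightarrow> (\<forall>m<n. \<exists>k. ev orc f (m # xs) (Suc k)) \<Longrightarrow> ev orc (Mu f) xs n"
| ev_Oracle: "orc (arg xs 0) = Some y \<Longrightarrow> ev orc Oracle xs y"

lemma prod_decode_fst_le: "fst (prod_decode n) \<le> n"
  by (metis le_prod_encode_1 prod.collapse prod_decode_inverse)
lemma prod_decode_snd_le: "snd (prod_decode n) \<le> n"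
  by (metis le_prod_encode_2 prod.collapse prod_decode_inverse)

lemma pd1: "0 < n \<Longrightarrow> fst (prod_decode (n - Suc 0)) < n"
  using prod_decode_fst_le[of "n - Suc 0"] by linarith
lemma pd2: "0 < n \<Longrightarrow> snd (prod_decode (n - Suc 0)) < n"
  using prod_decode_snd_le[of "n - Suc 0"] by linarith
lemma pd3: "0 < n \<Longrightarrow> fst (prod_decode (snd (prod_decode (n - Suc 0)))) < n"
  using prod_decode_fst_le[of "snd (prod_decode (n - Suc 0))"] pd2[of n] by linarith
lemma pd4: "0 < n \<Longrightarrow> snd (prod_decode (snd (prod_decode (n - Suc 0)))) < n"
  using prod_decode_snd_le[of "snd (prod_decode (n - Suc 0))"] pd2[of n] by linarith

function decode :: "nat \<Rightarrow> rf" and decode_list :: "nat \<Rightarrow> rf list" where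
  "decode n =
    (if n = 0 then Zero else
     (let t = fst (prod_decode (n - 1)); r = snd (prod_decode (n - 1)) in
      if t = 0 then Succ
      else if t = 1 then Proj r
      else if t = 2 then Comp (decode (fst (prod_decode r))) (decode_list (snd (prod_decode r)))
      else if t = 3 then PrimRec (decode (fst (prod_decode r))) (decode (snd (prod_decode r)))
      else if t = 4 then Mu (decode r)
      else Oracle))"
| "decode_list n =
    (if n = 0 then [] else decode (fst (prod_decode (n - 1))) # decode_list (snd (prod_decode (n - 1))))"
  by pat_completeness auto
termination
proof (relation "measure (case_sum id id)", goal_cases)
  case 1 show ?case by simp
qed (auto simp: Let_def pd1 pd2 pd3 pd4)

definition Phi :: "nat \<Rightarrow> (nat \<Rightarrow> nat option) \<Rightarrow> nat \<Rightarrow> nat option" where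
  "Phi e orc n = (if \<exists>y. ev orc (decode e) [n] y then Some (THE y. ev orc (decode e) [n] y) else None)"

definition pjoin :: "(nat \<Rightarrow> nat option) \<Rightarrow> (nat \<Rightarrow> nat option) \<Rightarrow> nat \<Rightarrow> nat option" where
  "pjoin g h n = (if even n then g (n div 2) else h (n div 2))"

definition K2_app :: "(nat \<Rightarrow> nat) \<Rightarrow> (nat \<Rightarrow> nat) \<Rightarrow> (nat \<Rightarrow> nat) option" where
  "K2_app g h = (let r = Phi (g 0) (pjoin (Some \<circ> g) (Some \<circ> h)) in
     if \<forall>n. r n \<noteq> None then Some (\<lambda>n. the (r n)) else None)"

definition B_app :: "(nat \<Rightarrow> nat option) \<Rightarrow> (nat \<Rightarrow> nat option) \<Rightarrow> (nat \<Rightarrow> nat option)" where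
  "B_app g h = (case g 0 of None \<Rightarrow> (\<lambda>_. None) | Some e \<Rightarrow> Phi e (pjoin g h))"

definition chi :: "nat set \<Rightarrow> nat \<Rightarrow> nat" where
  "chi X n = (if n \<in> X then 1 else 0)"

definition K2_rel :: "nat set \<Rightarrow> (nat \<Rightarrow> nat) set" where
  "K2_rel X = {g. \<exists>e. \<forall>n. Phi e (Some \<circ> chi X) n = Some (g n)}"

definition B_rel :: "nat set \<Rightarrow> (nat \<Rightarrow> nat option) set" where
  "B_rel Y = {g. \<exists>e. Phi e (Some \<circ> chi Y) = g}"

definition turing_le :: "nat set \<Rightarrow> nat set \<Rightarrow> bool" where
  "turing_le X Y \<longleftrightarrow> chi X \<in> K2_rel Y"

definition embedding_K2_B :: "nat set \<Rightarrow> nat set \<Rightarrow> ((nat \<Rightarrow> nat) \<Rightarrow> (nat \<Rightarrow> nat option)) \<Rightarrow> bool" where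
  "embedding_K2_B X Y f \<longleftrightarrow>
     inj_on f (K2_rel X) \<and> f ` K2_rel X \<subseteq> B_rel Y \<and>
     (\<forall>a\<in>K2_rel X. \<forall>a'\<in>K2_rel X. \<forall>c. K2_app a a' = Some c \<longrightarrow> B_app (f a) (f a') = f c)"

end

theory Submission
  imports Defs
begin

primrec encode :: "rf \<Rightarrow> nat" and encode_list :: "rf list \<Rightarrow> nat" where
 "encode Zero = 0"
|"encode Succ = Suc (prod_encode (0, 0))"
|"encode (Proj i) = Suc (prod_encode (1, i))"
|"encode (Comp f gs) = Suc (prod_encode (2, prod_encode (encode f, encode_list gs)))"
|"encode (PrimRec f g) = Suc (prod_encode (3, prod_encode (encode f, encode g)))"
|"encode (Mu f) = Suc (prod_encode (4, encode f))"
|"encode Oracle = Suc (prod_encode (5, 0))"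
|"encode_list [] = 0"
|"encode_list (g # gs) = Suc (prod_encode (encode g, encode_list gs))"

declare decode.simps[simp del] decode_list.simps[simp del]

lemma decode_codes:
  "decode 0 = Zero"
  "decode (Suc (prod_encode (0, r))) = Succ"
  "decode (Suc (prod_encode (1, r))) = Proj r"
  "decode (Suc (prod_encode (2, prod_encode (a, b)))) = Comp (decode a) (decode_list b)"
  "decode (Suc (prod_encode (3, prod_encode (a, b)))) = PrimRec (decode a) (decode b)"
  "decode (Suc (prod_encode (4, r))) = Mu (decode r)"
  "decode (Suc (prod_encode (5, r))) = Oracle"
  "decode (Suc (prod_encode (Suc 0, r))) = Proj r"
  "decode_list 0 = []"
  "decode_list (Suc (prod_encode (a, b))) = decode a # decode_list b"
  apply (subst decode.simps, simp)
  apply (subst decode.simps, simp)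
  apply (subst decode.simps, simp)
  apply (subst decode.simps, simp add: Let_def)
  apply (subst decode.simps, simp add: Let_def)
  apply (subst decode.simps, simp add: Let_def)
  apply (subst decode.simps, simp add: Let_def)
  apply (subst decode.simps, simp)
  apply (subst decode_list.simps, simp)
  apply (subst decode_list.simps, simp)
  done

lemma decode_encode: "decode (encode p) = p"
proof (induction p)
  case (Comp f gs)
  have "decode_list (encode_list gs) = gs" using Comp(2)
    by (induction gs) (auto simp: decode_codes)
  then show ?case using Comp(1) by (simp add: decode_codes)
qed (auto simp: decode_codes)

inductive_simps ev_Zero_iff[simp]: "ev orc Zero xs y"
inductive_simps ev_Succ_iff[simp]: "ev orc Succ xs y"
inductive_simps ev_Proj_iff[simp]: "ev orc (Proj i) xs y"
inductive_simps ev_Comp_iff[simp]: "ev orc (Comp f gs) xs y"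
inductive_simps ev_Oracle_iff[simp]: "ev orc Oracle xs y"
inductive_simps ev_Mu_iff: "ev orc (Mu f) xs y"
inductive_cases ev_PrimRecE: "ev orc (PrimRec f g) xs y"

lemma list_all2_det:
  "list_all2 (\<lambda>g y. P g y \<and> (\<forall>y'. P g y' \<longrightarrow> y = y')) gs ys \<Longrightarrow> list_all2 P gs ys' \<Longrightarrow> ys = ys'"
proof (induction gs arbitrary: ys ys')
  case Nil then show ?case by simp
next
  case (Cons a gs)
  then show ?case by (cases ys; cases ys'; auto)
qed

lemma ev_det: "ev orc p xs y \<Longrightarrow> ev orc p xs y' \<Longrightarrow> y = y'"
proof (induction arbitrary: y' rule: ev.induct)
  case (ev_Comp xs gs ys f z)
  from ev_Comp.prems obtain ys' where 1: "list_all2 (\<lambda>g. ev orc g xs) gs ys'" and 2: "ev orc f ys' y'"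
    unfolding ev_Comp_iff by blast
  have 3: "list_all2 (\<lambda>g y. ev orc g xs y \<and> (\<forall>y'. ev orc g xs y' \<longrightarrow> y = y')) gs ys"
    using ev_Comp(1) by (rule list_all2_mono) simp
  have "ys = ys'" by (rule list_all2_det[OF 3 1])
  with 2 have "ev orc f ys y'" by simp
  then show ?case by (rule ev_Comp.IH)
next
  case (ev_PrimRec0 xs f y g)
  from ev_PrimRec0(4) have "ev orc f (drop 1 xs) y'" using ev_PrimRec0(1) by (auto elim: ev_PrimRecE)
  then show ?case by (rule ev_PrimRec0.IH)
next
  case (ev_PrimRecS xs n f g y z)
  from ev_PrimRecS(6) obtain y2 where a: "ev orc (PrimRec f g) (n # drop 1 xs) y2"
     and b: "ev orc g (y2 # n # drop 1 xs) y'" using ev_PrimRecS(1) by (auto elim: ev_PrimRecE)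
  from a have "y = y2" by (rule ev_PrimRecS.IH(1))
  with b have "ev orc g (y # n # drop 1 xs) y'" by simp
  then show ?case by (rule ev_PrimRecS.IH(2))
next
  case (ev_Mu f n xs)
  from ev_Mu(4) have a: "ev orc f (y' # xs) 0" and b: "\<forall>m<y'. \<exists>k. ev orc f (m # xs) (Suc k)"
    by (auto simp: ev_Mu_iff)
  show ?case
  proof (rule linorder_cases[of n y'])
    assume "n < y'"
    with b obtain k where "ev orc f (n # xs) (Suc k)" by blast
    with ev_Mu(2) show ?thesis by blast
  next
    assume "y' < n"
    with ev_Mu(3) obtain k where "\<forall>y'a. ev orc f (y' # xs) y'a \<longrightarrow> Suc k = y'a" by blast
    with a show ?thesis by blast
  qed
next
  case (ev_Zero xs) then show ?case by simp
next
  case (ev_Succ xs) then show ?case by simp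
next
  case (ev_Proj i xs) then show ?case by simp
next
  case (ev_Oracle xs y) then show ?case by simp
qed

lemma ev_mono: "ev orc p xs y \<Longrightarrow> orc \<subseteq>\<^sub>m orc' \<Longrightarrow> ev orc' p xs y"
proof (induction rule: ev.induct)
  case (ev_Comp xs gs ys f z)
  then show ?case by (auto intro!: ev.ev_Comp elim: list_all2_mono)
next
  case (ev_Mu f n xs)
  then show ?case by (auto intro!: ev.ev_Mu)
next
  case (ev_Oracle xs y)
  then show ?case by (auto simp: map_le_def dom_def)
qed (auto intro: ev.intros)

lemma Phi_Some: "Phi e orc n = Some y \<longleftrightarrow> ev orc (decode e) [n] y"
  unfolding Phi_def using ev_det by (auto intro: theI2)

lemma Phi_mono: assumes "orc \<subseteq>\<^sub>m orc'" shows "Phi e orc \<subseteq>\<^sub>m Phi e orc'"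
  unfolding map_le_def
proof
  fix a assume "a \<in> dom (Phi e orc)"
  then obtain y where "Phi e orc a = Some y" by auto
  then have "ev orc (decode e) [a] y" by (simp add: Phi_Some)
  then have "ev orc' (decode e) [a] y" using assms by (rule ev_mono)
  then have "Phi e orc' a = Some y" by (simp add: Phi_Some)
  then show "Phi e orc a = Phi e orc' a" using \<open>Phi e orc a = Some y\<close> by simp
qed

lemma pjoin_mono: "g \<subseteq>\<^sub>m g' \<Longrightarrow> h \<subseteq>\<^sub>m h' \<Longrightarrow> pjoin g h \<subseteq>\<^sub>m pjoin g' h'"
  unfolding map_le_def pjoin_def by (auto simp: dom_def)

lemma B_app_mono: "h \<subseteq>\<^sub>m h' \<Longrightarrow> B_app g h \<subseteq>\<^sub>m B_app g h'"
  unfolding B_app_def by (auto split: option.split intro!: Phi_mono pjoin_mono)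

primrec osub :: "rf \<Rightarrow> rf \<Rightarrow> rf" where
  "osub Q Zero = Zero"
| "osub Q Succ = Succ"
| "osub Q (Proj i) = Proj i"
| "osub Q (Comp f gs) = Comp (osub Q f) (map (osub Q) gs)"
| "osub Q (PrimRec f g) = PrimRec (osub Q f) (osub Q g)"
| "osub Q (Mu f) = Mu (osub Q f)"
| "osub Q Oracle = Comp Q [Proj 0]"

lemma osub_1:
  assumes Q: "\<And>m y. ev orc' Q [m] y \<longleftrightarrow> orc m = Some y"
  shows "ev orc p xs y \<Longrightarrow> ev orc' (osub Q p) xs y"
proof (induction rule: ev.induct)
  case (ev_Comp xs gs ys f z)
  then show ?case by (auto simp: list_all2_map1 elim: list_all2_mono)
next
  case (ev_PrimRec0 xs f y g)
  then show ?case by (auto intro: ev.intros)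
next
  case (ev_PrimRecS xs n f g y z)
  then show ?case by (auto intro: ev.intros)
next
  case (ev_Mu f n xs)
  then show ?case by (auto intro!: ev.ev_Mu)
next
  case (ev_Oracle xs y)
  then show ?case using Q by (auto intro!: exI[of _ "[arg xs 0]"])
qed auto

lemma osub_2:
  assumes Q: "\<And>m y. ev orc' Q [m] y \<longleftrightarrow> orc m = Some y"
  shows "ev orc' q xs y \<Longrightarrow> q = osub Q p \<Longrightarrow> ev orc p xs y"
proof (induction arbitrary: p rule: ev.induct)
  case (ev_Comp xs gs ys f z)
  show ?case
  proof (cases p)
    case (Comp f' gs')
    with ev_Comp.prems have f: "f = osub Q f'" and gs: "gs = map (osub Q) gs'" by auto
    have "list_all2 (\<lambda>g y. ev orc g xs y) gs' ys"
      using ev_Comp(1) unfolding gs list_all2_map1 by (rule list_all2_mono) auto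
    then show ?thesis using ev_Comp(2)[OF f] Comp by auto
  next
    case Oracle
    with ev_Comp.prems have "f = Q" "gs = [Proj 0]" by auto
    moreover have "ys = [arg xs 0]" using ev_Comp(1) \<open>gs = [Proj 0]\<close>
      by (auto simp: list_all2_Cons1)
    ultimately show ?thesis using ev_Comp(3) Q Oracle by auto
  qed (use ev_Comp.prems in auto)
next
  case (ev_PrimRec0 xs f y g)
  then show ?case by (cases p) (auto intro: ev.intros)
next
  case (ev_PrimRecS xs n f g y z)
  then show ?case
  proof (cases p)
    case (PrimRec f' g')
    with ev_PrimRecS have "ev orc (PrimRec f' g') (n # drop 1 xs) y" "ev orc g' (y # n # drop 1 xs) z"
      by auto
    then show ?thesis using PrimRec ev_PrimRecS(1) by (auto intro: ev.ev_PrimRecS)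
  qed auto
next
  case (ev_Mu f n xs)
  then show ?case
  proof (cases p)
    case (Mu f')
    with ev_Mu have f: "f = osub Q f'" by auto
    have "ev orc f' (n # xs) 0" using ev_Mu(2)[OF f] .
    moreover have "\<forall>m<n. \<exists>k. ev orc f' (m # xs) (Suc k)"
      using ev_Mu(3) f by blast
    ultimately show ?thesis using Mu by (auto intro: ev.ev_Mu)
  qed auto
next
  case (ev_Zero xs) then show ?case by (cases p) auto
next
  case (ev_Succ xs) then show ?case by (cases p) auto
next
  case (ev_Proj i xs) then show ?case by (cases p) auto
next
  case (ev_Oracle xs y) then show ?case by (cases p) auto
qed

lemma osub_iff:
  assumes Q: "\<And>m y. ev orc' Q [m] y \<longleftrightarrow> orc m = Some y"
  shows "ev orc' (osub Q p) xs y \<longleftrightarrow> ev orc p xs y"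
  using osub_1[OF Q] osub_2[OF Q] by blast

lemma Phi_osub_eq:
  assumes Q: "\<And>m y. ev orc' Q [m] y \<longleftrightarrow> orc m = Some y"
  shows "Phi (encode (osub Q (decode e))) orc' = Phi e orc"
  unfolding Phi_def fun_eq_iff decode_encode osub_iff[OF Q] by simp

lemma dir_if:
  assumes "turing_le X Y"
  shows "\<exists>f. embedding_K2_B X Y f"
proof -
  from assms obtain e0 where e0: "\<And>n. Phi e0 (Some \<circ> chi Y) n = Some (chi X n)"
    unfolding turing_le_def K2_rel_def by auto
  have Q: "ev (Some \<circ> chi Y) (decode e0) [m] y \<longleftrightarrow> (Some \<circ> chi X) m = Some y" for m y
    using e0[of m] by (auto simp: Phi_Some[symmetric])
  have "embedding_K2_B X Y (\<lambda>g. Some \<circ> g)"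
    unfolding embedding_K2_B_def
  proof (intro conjI)
    show "inj_on (\<lambda>g. Some \<circ> g) (K2_rel X)"
      by (auto simp: inj_on_def fun_eq_iff)
    show "(\<lambda>g. Some \<circ> g) ` K2_rel X \<subseteq> B_rel Y"
    proof
      fix h assume "h \<in> (\<lambda>g. Some \<circ> g) ` K2_rel X"
      then obtain g e where h: "h = Some \<circ> g" and e: "\<And>n. Phi e (Some \<circ> chi X) n = Some (g n)"
        unfolding K2_rel_def by auto
      have "Phi (encode (osub (decode e0) (decode e))) (Some \<circ> chi Y) = h"
        unfolding Phi_osub_eq[OF Q] h using e by (auto simp: fun_eq_iff)
      then show "h \<in> B_rel Y" unfolding B_rel_def by blast
    qed
    show "\<forall>a\<in>K2_rel X. \<forall>a'\<in>K2_rel X. \<forall>c. K2_app a a' = Some c \<longrightarrow>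
        B_app (Some \<circ> a) (Some \<circ> a') = Some \<circ> c"
      by (auto simp: K2_app_def B_app_def Let_def fun_eq_iff split: if_splits) (metis option.sel)
  qed
  then show ?thesis by blast
qed

definition rep :: "(nat \<Rightarrow> nat option) \<Rightarrow> rf \<Rightarrow> (nat list \<Rightarrow> nat) \<Rightarrow> bool" where
  "rep orc p F \<longleftrightarrow> (\<forall>xs y. ev orc p xs y \<longleftrightarrow> y = F xs)"

named_theorems rep_rules

lemma arg_simps[simp]:
  "arg [] i = 0" "arg (x # xs) 0 = x" "arg (x # xs) (Suc i) = arg xs i"
  "arg (x # xs) (numeral n) = arg xs (pred_numeral n)"
  by (auto simp: arg_def numeral_eq_Suc)

lemma rep_cong: "rep orc p F \<Longrightarrow> (\<And>xs. F xs = G xs) \<Longrightarrow> rep orc p G"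
  unfolding rep_def by auto

lemma rep_Zero[rep_rules]: "rep orc Zero (\<lambda>_. 0)"
  unfolding rep_def by simp
lemma rep_Succ[rep_rules]: "rep orc Succ (\<lambda>xs. Suc (arg xs 0))"
  unfolding rep_def by simp
lemma rep_Proj[rep_rules]: "rep orc (Proj i) (\<lambda>xs. arg xs i)"
  unfolding rep_def by simp
lemma rep_Oracle[rep_rules]: "rep (Some \<circ> g) Oracle (\<lambda>xs. g (arg xs 0))"
  unfolding rep_def by auto

lemma list_all2_rep:
  "list_all2 (rep orc) gs Gs \<Longrightarrow> list_all2 (\<lambda>g y. ev orc g xs y) gs ys \<longleftrightarrow> ys = map (\<lambda>G. G xs) Gs"
proof (induction gs arbitrary: Gs ys)
  case Nil then show ?case by auto
next
  case (Cons g gs)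
  then obtain G Gs' where "Gs = G # Gs'" "rep orc g G" "list_all2 (rep orc) gs Gs'"
    by (auto simp: list_all2_Cons1)
  have IH: "list_all2 (\<lambda>g y. ev orc g xs y) gs zs \<longleftrightarrow> zs = map (\<lambda>G. G xs) Gs'" for zs
    using Cons.IH[OF \<open>list_all2 (rep orc) gs Gs'\<close>] .
  show ?case using \<open>Gs = G # Gs'\<close> \<open>rep orc g G\<close> IH by (cases ys) (auto simp: rep_def)
qed

lemma rep_Comp[rep_rules]:
  "rep orc f F \<Longrightarrow> list_all2 (rep orc) gs Gs \<Longrightarrow> rep orc (Comp f gs) (\<lambda>xs. F (map (\<lambda>G. G xs) Gs))"
  unfolding rep_def[of _ "Comp f gs"] using list_all2_rep by (auto simp: rep_def)

lemma list_all2_intros[rep_rules]: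
  "list_all2 P [] []" "P x y \<Longrightarrow> list_all2 P xs ys \<Longrightarrow> list_all2 P (x # xs) (y # ys)"
  by auto

fun prec :: "(nat list \<Rightarrow> nat) \<Rightarrow> (nat list \<Rightarrow> nat) \<Rightarrow> nat \<Rightarrow> nat list \<Rightarrow> nat" where
  "prec F G 0 r = F r"
| "prec F G (Suc n) r = G (prec F G n r # n # r)"

inductive_simps ev_PrimRec_iff: "ev orc (PrimRec f g) xs y"

lemma rep_PrimRec[rep_rules]:
  assumes f: "rep orc f F" and g: "rep orc g G"
  shows "rep orc (PrimRec f g) (\<lambda>xs. prec F G (arg xs 0) (drop 1 xs))"
proof -
  have "\<forall>xs y. arg xs 0 = n \<longrightarrow> (ev orc (PrimRec f g) xs y \<longleftrightarrow> y = prec F G n (drop 1 xs))" for n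
  proof (induction n)
    case 0
    then show ?case using f by (subst ev_PrimRec_iff) (auto simp: rep_def)
  next
    case (Suc n)
    show ?case
    proof (intro allI impI)
      fix xs y assume a: "arg xs 0 = Suc n"
      have IH: "ev orc (PrimRec f g) (n # drop 1 xs) y' \<longleftrightarrow> y' = prec F G n (drop 1 xs)" for y'
        using Suc.IH by auto
      show "ev orc (PrimRec f g) xs y \<longleftrightarrow> y = prec F G (Suc n) (drop 1 xs)"
        using a IH g by (subst ev_PrimRec_iff) (auto simp: rep_def)
    qed
  qed
  then show ?thesis unfolding rep_def by auto
qed

lemma rep_PrimRec_gen:
  assumes "rep orc f F" "rep orc g G" "\<And>r. H 0 r = F r" "\<And>n r. H (Suc n) r = G (H n r # n # r)"
  shows "rep orc (PrimRec f g) (\<lambda>xs. H (arg xs 0) (drop 1 xs))"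
proof -
  have "prec F G n r = H n r" for n r by (induction n) (simp_all add: assms)
  then show ?thesis using rep_PrimRec[OF assms(1,2)] by simp
qed

lemma arg_drop[simp]: "arg (drop n xs) i = arg xs (n + i)"
  by (auto simp: arg_def)

lemma arg_Suc_num[simp]: "arg xs (Suc (Suc 0)) = arg xs 2" "arg xs (Suc (Suc (Suc 0))) = arg xs 3"
  "arg xs (Suc (Suc (Suc (Suc 0)))) = arg xs 4" "arg xs (Suc (Suc (Suc (Suc (Suc 0))))) = arg xs 5"
  by (simp_all add: numeral_eq_Suc)

lemma rep_Mu:
  assumes "rep orc p F"
  shows "ev orc (Mu p) xs n \<longleftrightarrow> F (n # xs) = 0 \<and> (\<forall>m<n. F (m # xs) \<noteq> 0)"
proof -
  have e: "(\<exists>k. Suc k = x) \<longleftrightarrow> x \<noteq> 0" for x :: nat by presburger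
  show ?thesis using assms unfolding rep_def ev_Mu_iff by (auto simp: e)
qed

lemma rep_Phi:
  assumes "rep orc p F"
  shows "Phi (encode p) orc n = Some (F [n])"
  using assms by (simp add: Phi_Some decode_encode rep_def)

primrec konst :: "nat \<Rightarrow> rf" where
  "konst 0 = Zero"
| "konst (Suc n) = Comp Succ [konst n]"

lemma rep_konst[rep_rules]: "rep orc (konst n) (\<lambda>_. n)"
proof (induction n)
  case 0 show ?case using rep_Zero by simp
next
  case (Suc n)
  have "rep orc (Comp Succ [konst n]) (\<lambda>_. Suc n)"
    by (rule rep_cong, (rule rep_rules Suc.IH)+) simp
  then show ?case by simp
qed

definition "PRED = PrimRec Zero (Proj 1)"
lemma rep_PRED[rep_rules]: "rep orc PRED (\<lambda>xs. arg xs 0 - 1)"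
  unfolding PRED_def
  by (rule rep_cong[OF rep_PrimRec_gen[where H="\<lambda>n r. n - 1"]], (rule rep_rules)+) simp_all

definition "ADD = PrimRec (Proj 0) (Comp Succ [Proj 0])"
lemma rep_ADD[rep_rules]: "rep orc ADD (\<lambda>xs. arg xs 0 + arg xs 1)"
  unfolding ADD_def
  by (rule rep_cong[OF rep_PrimRec_gen[where H="\<lambda>n r. n + arg r 0"]], (rule rep_rules)+) simp_all

definition "SUBR = PrimRec (Proj 0) (Comp PRED [Proj 0])"
lemma rep_SUBR[rep_rules]: "rep orc SUBR (\<lambda>xs. arg xs 1 - arg xs 0)"
  unfolding SUBR_def
  by (rule rep_cong[OF rep_PrimRec_gen[where H="\<lambda>n r. arg r 0 - n"]], (rule rep_rules)+) simp_all

definition "MONUS = Comp SUBR [Proj 1, Proj 0]"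
lemma rep_MONUS[rep_rules]: "rep orc MONUS (\<lambda>xs. arg xs 0 - arg xs 1)"
  unfolding MONUS_def by (rule rep_cong, (rule rep_rules)+) simp

definition "MULT = PrimRec Zero (Comp ADD [Proj 0, Proj 2])"
lemma rep_MULT[rep_rules]: "rep orc MULT (\<lambda>xs. arg xs 0 * arg xs 1)"
  unfolding MULT_def
  by (rule rep_cong[OF rep_PrimRec_gen[where H="\<lambda>n r. n * arg r 0"]], (rule rep_rules)+) simp_all

definition "TRI = PrimRec Zero (Comp ADD [Proj 0, Comp Succ [Proj 1]])"
lemma rep_TRI[rep_rules]: "rep orc TRI (\<lambda>xs. triangle (arg xs 0))"
  unfolding TRI_def
  by (rule rep_cong[OF rep_PrimRec_gen[where H="\<lambda>n r. triangle n"]], (rule rep_rules)+) simp_all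

definition "PE = Comp ADD [Comp TRI [Comp ADD [Proj 0, Proj 1]], Proj 0]"
lemma rep_PE[rep_rules]: "rep orc PE (\<lambda>xs. prod_encode (arg xs 0, arg xs 1))"
  unfolding PE_def by (rule rep_cong, (rule rep_rules)+) (simp add: prod_encode_def)

definition "IFZ = PrimRec (Proj 0) (Proj 3)"
lemma rep_IFZ[rep_rules]: "rep orc IFZ (\<lambda>xs. if arg xs 0 = 0 then arg xs 1 else arg xs 2)"
  unfolding IFZ_def
  by (rule rep_cong[OF rep_PrimRec_gen[where H="\<lambda>n r. if n = 0 then arg r 0 else arg r 1"]],
      (rule rep_rules)+) simp_all

fun sr :: "nat \<Rightarrow> nat" where
  "sr 0 = 0"
| "sr (Suc n) = (if triangle (Suc (sr n)) \<le> Suc n then Suc (sr n) else sr n)"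

lemma sr_inv: "triangle (sr n) \<le> n \<and> n < triangle (Suc (sr n))"
  by (induction n) auto

lemma prod_decode_sr: "prod_decode n = (n - triangle (sr n), sr n - (n - triangle (sr n)))"
proof -
  define s where "s = sr n"
  define a where "a = n - triangle s"
  have 1: "triangle s \<le> n" "n < triangle (Suc s)" using sr_inv[of n] by (auto simp: s_def)
  then have "a \<le> s" by (auto simp: a_def)
  then have "prod_encode (a, s - a) = n" using 1 by (simp add: prod_encode_def a_def)
  then have "prod_decode n = (a, s - a)" by (metis prod_encode_inverse)
  then show ?thesis by (simp add: a_def s_def)
qed

definition "SR = PrimRec Zero (Comp IFZ [Comp MONUS [Comp TRI [Comp Succ [Proj 0]], Comp Succ [Proj 1]],
   Comp Succ [Proj 0], Proj 0])"
lemma rep_SR[rep_rules]: "rep orc SR (\<lambda>xs. sr (arg xs 0))"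
  unfolding SR_def
  by (rule rep_cong[OF rep_PrimRec_gen[where H="\<lambda>n r. sr n"]], (rule rep_rules)+) simp_all

definition "PD1 = Comp MONUS [Proj 0, Comp TRI [Comp SR [Proj 0]]]"
lemma rep_PD1[rep_rules]: "rep orc PD1 (\<lambda>xs. fst (prod_decode (arg xs 0)))"
  unfolding PD1_def by (rule rep_cong, (rule rep_rules)+) (simp add: prod_decode_sr)

definition "PD2 = Comp MONUS [Comp SR [Proj 0], Comp PD1 [Proj 0]]"
lemma rep_PD2[rep_rules]: "rep orc PD2 (\<lambda>xs. snd (prod_decode (arg xs 0)))"
  unfolding PD2_def by (rule rep_cong, (rule rep_rules)+) (simp add: prod_decode_sr)

definition hdc :: "nat \<Rightarrow> nat" where "hdc n = fst (prod_decode (n - 1))"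
definition tlc :: "nat \<Rightarrow> nat" where "tlc n = snd (prod_decode (n - 1))"
definition consc :: "nat \<Rightarrow> nat \<Rightarrow> nat" where "consc x xs = Suc (prod_encode (x, xs))"

lemma prod_decode_0[simp]: "prod_decode 0 = (0, 0)"
  by (simp add: prod_decode_def prod_decode_aux.simps)

lemma hdc_tlc_simps[simp]: "hdc 0 = 0" "tlc 0 = 0" "hdc (consc x xs) = x" "tlc (consc x xs) = xs"
  "consc x xs \<noteq> 0"
  by (auto simp: hdc_def tlc_def consc_def)

lemma tlc_less: "n \<noteq> 0 \<Longrightarrow> tlc n < n"
  unfolding tlc_def using pd2 by simp
lemma hdc_less: "n \<noteq> 0 \<Longrightarrow> hdc n < n"
  unfolding hdc_def using pd1 by simp
lemma consc_hdc_tlc: "n \<noteq> 0 \<Longrightarrow> consc (hdc n) (tlc n) = n"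
  unfolding hdc_def tlc_def consc_def by simp

function decl :: "nat \<Rightarrow> nat list" where
  "decl n = (if n = 0 then [] else hdc n # decl (tlc n))"
  by auto
termination by (relation "measure id") (auto simp: tlc_less)
declare decl.simps[simp del]

primrec encl :: "nat list \<Rightarrow> nat" where
  "encl [] = 0"
| "encl (x # xs) = consc x (encl xs)"

lemma decl_simps[simp]: "decl 0 = []" "decl (consc x xs) = x # decl xs"
  by (subst decl.simps; simp)+

lemma decl_encl[simp]: "decl (encl xs) = xs"
  by (induction xs) auto

lemma encl_decl[simp]: "encl (decl n) = n"
proof (induction n rule: decl.induct)
  case (1 n)
  then show ?case by (subst decl.simps) (auto simp: consc_hdc_tlc)
qed

lemma decl_tlc: "decl (tlc n) = drop 1 (decl n)"
  by (subst (2) decl.simps) auto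

lemma arg_decl: "arg (decl t) i = hdc ((tlc ^^ i) t)"
proof (induction i arbitrary: t)
  case 0 then show ?case by (subst decl.simps) auto
next
  case (Suc i)
  have z: "(tlc ^^ i) 0 = 0" for i by (induction i) auto
  show ?case
  proof (cases "t = 0")
    case True then show ?thesis by (simp add: z funpow_swap1)
  next
    case False
    then show ?thesis using Suc[of "tlc t"] by (subst decl.simps) (simp add: funpow_swap1)
  qed
qed

definition argc :: "nat \<Rightarrow> nat \<Rightarrow> nat" where "argc xs i = hdc ((tlc ^^ i) xs)"

lemma argc_decl: "argc t i = arg (decl t) i"
  by (simp add: argc_def arg_decl)

lemma argc_encl: "argc (encl xs) i = arg xs i"
  by (simp add: argc_decl)

definition "HD = Comp PD1 [Comp PRED [Proj 0]]"
lemma rep_HD[rep_rules]: "rep orc HD (\<lambda>xs. hdc (arg xs 0))"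
  unfolding HD_def by (rule rep_cong, (rule rep_rules)+) (simp add: hdc_def)

definition "TL = Comp PD2 [Comp PRED [Proj 0]]"
lemma rep_TL[rep_rules]: "rep orc TL (\<lambda>xs. tlc (arg xs 0))"
  unfolding TL_def by (rule rep_cong, (rule rep_rules)+) (simp add: tlc_def)

definition "CONS = Comp Succ [PE]"
lemma rep_CONS[rep_rules]: "rep orc CONS (\<lambda>xs. consc (arg xs 0) (arg xs 1))"
  unfolding CONS_def by (rule rep_cong, (rule rep_rules)+) (simp add: consc_def)

definition "ITL = PrimRec (Proj 0) (Comp TL [Proj 0])"
lemma rep_ITL[rep_rules]: "rep orc ITL (\<lambda>xs. (tlc ^^ arg xs 0) (arg xs 1))"
  unfolding ITL_def
  by (rule rep_cong[OF rep_PrimRec_gen[where H="\<lambda>n r. (tlc ^^ n) (arg r 0)"]], (rule rep_rules)+) simp_all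

definition "ARGC = Comp HD [Comp ITL [Proj 1, Proj 0]]"
lemma rep_ARGC[rep_rules]: "rep orc ARGC (\<lambda>xs. argc (arg xs 0) (arg xs 1))"
  unfolding ARGC_def by (rule rep_cong, (rule rep_rules)+) (simp add: argc_def)

definition "EQN = Comp ADD [Comp MONUS [Proj 0, Proj 1], Comp MONUS [Proj 1, Proj 0]]"
lemma rep_EQN[rep_rules]: "rep orc EQN (\<lambda>xs. (arg xs 0 - arg xs 1) + (arg xs 1 - arg xs 0))"
  unfolding EQN_def by (rule rep_cong, (rule rep_rules)+) simp

lemma eqn_0[simp]: "((a::nat) - b) + (b - a) = 0 \<longleftrightarrow> a = b"
  by auto

definition "PAR = PrimRec Zero (Comp MONUS [konst 1, Proj 0])"
lemma rep_PAR[rep_rules]: "rep orc PAR (\<lambda>xs. arg xs 0 mod 2)"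
  unfolding PAR_def
  by (rule rep_cong[OF rep_PrimRec_gen[where H="\<lambda>n r. n mod 2"]], (rule rep_rules)+) (simp_all add: mod_Suc)

definition "HALF = PrimRec Zero (Comp ADD [Proj 0, Comp PAR [Proj 1]])"
lemma rep_HALF[rep_rules]: "rep orc HALF (\<lambda>xs. arg xs 0 div 2)"
  unfolding HALF_def
  by (rule rep_cong[OF rep_PrimRec_gen[where H="\<lambda>n r. n div 2"]], (rule rep_rules)+) (simp_all add: div_Suc mod_Suc)

definition "BSUM2 B = PrimRec Zero (Comp ADD [Proj 0, Comp B [Proj 1, Proj 2, Proj 3]])"
lemma rep_BSUM2[rep_rules]: "rep orc B F \<Longrightarrow>
   rep orc (BSUM2 B) (\<lambda>xs. \<Sum>i<arg xs 0. F [i, arg xs 1, arg xs 2])"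
  unfolding BSUM2_def
  by (rule rep_cong[OF rep_PrimRec_gen[where H="\<lambda>n r. \<Sum>i<n. F [i, arg r 0, arg r 1]"]], (rule rep_rules | assumption)+) simp_all

definition "BPROD2 B = PrimRec (konst 1) (Comp MULT [Proj 0, Comp B [Proj 1, Proj 2, Proj 3]])"
lemma rep_BPROD2[rep_rules]: "rep orc B F \<Longrightarrow>
   rep orc (BPROD2 B) (\<lambda>xs. \<Prod>i<arg xs 0. F [i, arg xs 1, arg xs 2])"
  unfolding BPROD2_def
  by (rule rep_cong[OF rep_PrimRec_gen[where H="\<lambda>n r. \<Prod>i<n. F [i, arg r 0, arg r 1]"]], (rule rep_rules | assumption)+) (simp_all add: mult.commute)

lemma snd_pd_fst_pd_less: "c \<noteq> 0 \<Longrightarrow> snd (prod_decode (fst (prod_decode (c - 1)))) < c"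
  using prod_decode_snd_le[of "fst (prod_decode (c - 1))"] prod_decode_fst_le[of "c - 1"] by linarith
lemma snd_pd_snd_pd_less: "c \<noteq> 0 \<Longrightarrow> snd (prod_decode (snd (prod_decode (c - 1)))) < c"
  using prod_decode_snd_le[of "snd (prod_decode (c - 1))"] prod_decode_snd_le[of "c - 1"] by linarith

function orc :: "nat set \<Rightarrow> nat \<Rightarrow> (nat \<Rightarrow> nat option)" where
  "orc Y c = (if c = 0 then Some \<circ> chi Y else
     pjoin (Phi (fst (prod_decode (fst (prod_decode (c - 1))))) (orc Y (snd (prod_decode (fst (prod_decode (c - 1)))))))
           (Phi (fst (prod_decode (snd (prod_decode (c - 1))))) (orc Y (snd (prod_decode (snd (prod_decode (c - 1))))))))"
  by auto
termination
proof (relation "measure (\<lambda>(Y, c). c)", goal_cases)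
  case 1 show ?case by simp
next
  case (2 Y c) then show ?case using snd_pd_fst_pd_less[of c] by simp
next
  case (3 Y c) then show ?case using snd_pd_snd_pd_less[of c] by simp
qed
declare orc.simps[simp del]

lemma orc_0: "orc Y 0 = Some \<circ> chi Y"
  by (subst orc.simps) simp

lemma orc_nz: "c \<noteq> 0 \<Longrightarrow> orc Y c =
   pjoin (Phi (fst (prod_decode (hdc c))) (orc Y (snd (prod_decode (hdc c)))))
         (Phi (fst (prod_decode (tlc c))) (orc Y (snd (prod_decode (tlc c)))))"
  by (subst orc.simps) (simp add: hdc_def tlc_def)

lemma ctx_less: "c \<noteq> 0 \<Longrightarrow> snd (prod_decode (hdc c)) < c" "c \<noteq> 0 \<Longrightarrow> snd (prod_decode (tlc c)) < c"
  using snd_pd_fst_pd_less snd_pd_snd_pd_less by (auto simp: hdc_def tlc_def)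

definition jctx :: "nat \<Rightarrow> nat \<Rightarrow> nat \<Rightarrow> nat \<Rightarrow> nat" where
  "jctx e1 c1 e2 c2 = consc (prod_encode (e1, c1)) (prod_encode (e2, c2))"

lemma orc_jctx: "orc Y (jctx e1 c1 e2 c2) = pjoin (Phi e1 (orc Y c1)) (Phi e2 (orc Y c2))"
  by (simp add: jctx_def orc_nz)

definition fc :: "nat \<Rightarrow> nat \<Rightarrow> nat \<Rightarrow> nat \<Rightarrow> nat \<Rightarrow> nat" where
  "fc k c e xs y = prod_encode (k, prod_encode (c, prod_encode (e, prod_encode (xs, y))))"

lemma fc_inj[simp]: "fc k c e xs y = fc k' c' e' xs' y' \<longleftrightarrow> k = k' \<and> c = c' \<and> e = e' \<and> xs = xs' \<and> y = y'"
  unfolding fc_def by (metis prod_encode_inverse prod.inject)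

definition fk where "fk F = fst (prod_decode F)"
definition fcx where "fcx F = fst (prod_decode (snd (prod_decode F)))"
definition fe where "fe F = fst (prod_decode (snd (prod_decode (snd (prod_decode F)))))"
definition fxs where "fxs F = fst (prod_decode (snd (prod_decode (snd (prod_decode (snd (prod_decode F)))))))"
definition fy where "fy F = snd (prod_decode (snd (prod_decode (snd (prod_decode (snd (prod_decode F)))))))"

lemma f_comps[simp]: "fk (fc k c e xs y) = k" "fcx (fc k c e xs y) = c" "fe (fc k c e xs y) = e"
  "fxs (fc k c e xs y) = xs" "fy (fc k c e xs y) = y"
  by (simp_all add: fc_def fk_def fcx_def fe_def fxs_def fy_def)

lemma fc_comps: "fc (fk F) (fcx F) (fe F) (fxs F) (fy F) = F"
  by (simp add: fc_def fk_def fcx_def fe_def fxs_def fy_def)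

definition semc :: "nat set \<Rightarrow> nat \<Rightarrow> nat \<Rightarrow> nat \<Rightarrow> nat \<Rightarrow> nat \<Rightarrow> bool" where
  "semc Y k c e xs y = (if k = 0 then ev (orc Y c) (decode e) (decl xs) y
     else if k = 1 then list_all2 (\<lambda>g y. ev (orc Y c) g (decl xs) y) (decode_list e) (decl y)
     else if k = 2 then (\<forall>m<y. \<exists>k. ev (orc Y c) (decode e) (m # decl xs) (Suc k))
     else False)"

definition req1 :: "nat \<Rightarrow> nat \<Rightarrow> nat \<Rightarrow> nat \<Rightarrow> nat \<Rightarrow> nat \<Rightarrow> nat" where
  "req1 k c e xs y w =
   (if k = 0 then
     (if e = 0 then fc k c e xs y
      else if hdc e = 0 then fc k c e xs y
      else if hdc e = 1 then fc k c e xs y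
      else if hdc e = 2 then fc 1 c (snd (prod_decode (tlc e))) xs w
      else if hdc e = 3 then
        (if argc xs 0 = 0 then fc 0 c (fst (prod_decode (tlc e))) (tlc xs) y
         else fc 0 c e (consc (argc xs 0 - 1) (tlc xs)) w)
      else if hdc e = 4 then fc 0 c (tlc e) (consc y xs) 0
      else if c = 0 then fc k c e xs y
      else if argc xs 0 mod 2 = 0
        then fc 0 (snd (prod_decode (hdc c))) (fst (prod_decode (hdc c))) (consc (argc xs 0 div 2) 0) y
        else fc 0 (snd (prod_decode (tlc c))) (fst (prod_decode (tlc c))) (consc (argc xs 0 div 2) 0) y)
    else if k = 1 then (if e = 0 then fc k c e xs y else fc 0 c (hdc e) xs (hdc y))
    else if k = 2 then (if y = 0 then fc k c e xs y else fc 2 c e xs (y - 1))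
    else fc k c e xs y)"

definition req2 :: "nat \<Rightarrow> nat \<Rightarrow> nat \<Rightarrow> nat \<Rightarrow> nat \<Rightarrow> nat \<Rightarrow> nat" where
  "req2 k c e xs y w =
   (if k = 0 then
     (if e = 0 then fc k c e xs y
      else if hdc e = 2 then fc 0 c (fst (prod_decode (tlc e))) w y
      else if hdc e = 3 then
        (if argc xs 0 = 0 then fc k c e xs y
         else fc 0 c (snd (prod_decode (tlc e))) (consc w (consc (argc xs 0 - 1) (tlc xs))) y)
      else if hdc e = 4 then fc 2 c (tlc e) xs y
      else fc k c e xs y)
    else if k = 1 then (if e = 0 then fc k c e xs y else fc 1 c (tlc e) xs (tlc y))
    else if k = 2 then (if y = 0 then fc k c e xs y else fc 0 c e (consc (y - 1) xs) (Suc w))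
    else fc k c e xs y)"

definition cnd :: "nat set \<Rightarrow> nat \<Rightarrow> nat \<Rightarrow> nat \<Rightarrow> nat \<Rightarrow> nat \<Rightarrow> bool" where
  "cnd Y k c e xs y =
   (if k = 0 then
     (if e = 0 then y = 0
      else if hdc e = 0 then y = Suc (argc xs 0)
      else if hdc e = 1 then y = argc xs (tlc e)
      else if hdc e \<le> 4 then True
      else if c = 0 then y = chi Y (argc xs 0)
      else True)
    else if k = 1 then (if e = 0 then y = 0 else y \<noteq> 0)
    else k = 2)"

definition lineok :: "nat set \<Rightarrow> nat set \<Rightarrow> nat \<Rightarrow> nat \<Rightarrow> nat \<Rightarrow> nat \<Rightarrow> nat \<Rightarrow> nat \<Rightarrow> bool" where
  "lineok Y S k c e xs y w = (req1 k c e xs y w \<in> S \<and> req2 k c e xs y w \<in> S \<and> cnd Y k c e xs y)"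

definition facts :: "nat list \<Rightarrow> nat set" where
  "facts L = (\<lambda>ln. fst (prod_decode ln)) ` set L"

definition lnok :: "nat set \<Rightarrow> nat set \<Rightarrow> nat \<Rightarrow> bool" where
  "lnok Y S ln = (let F = fst (prod_decode ln) in
     lineok Y S (fk F) (fcx F) (fe F) (fxs F) (fy F) (snd (prod_decode ln)))"

definition valid :: "nat set \<Rightarrow> nat list \<Rightarrow> bool" where
  "valid Y L = (\<forall>ln\<in>set L. lnok Y (facts L) ln)"

lemma lineok_mono: assumes "lineok Y S k c e xs y w" "S \<subseteq> S'" shows "lineok Y S' k c e xs y w"
  using assms unfolding lineok_def by blast

lemma facts_append[simp]: "facts (L1 @ L2) = facts L1 \<union> facts L2"
  by (auto simp: facts_def)

lemma valid_append: "valid Y L1 \<Longrightarrow> valid Y L2 \<Longrightarrow> valid Y (L1 @ L2)"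
  unfolding valid_def lnok_def Let_def by (auto elim!: lineok_mono)

lemma valid_addl:
  assumes "valid Y L" "lineok Y (insert (fc k c e xs y) (facts L)) k c e xs y w"
  shows "valid Y (L @ [prod_encode (fc k c e xs y, w)])" "fc k c e xs y \<in> facts (L @ [prod_encode (fc k c e xs y, w)])"
proof -
  show "valid Y (L @ [prod_encode (fc k c e xs y, w)])"
    using assms unfolding valid_def lnok_def Let_def by (auto elim!: lineok_mono simp: facts_def)
  show "fc k c e xs y \<in> facts (L @ [prod_encode (fc k c e xs y, w)])"
    by (simp add: facts_def)
qed

lemma valid_Nil: "valid Y []" by (simp add: valid_def)

lemma decode_nz: "e \<noteq> 0 \<Longrightarrow> decode e =
  (if hdc e = 0 then Succ else if hdc e = 1 then Proj (tlc e)
   else if hdc e = 2 then Comp (decode (fst (prod_decode (tlc e)))) (decode_list (snd (prod_decode (tlc e))))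
   else if hdc e = 3 then PrimRec (decode (fst (prod_decode (tlc e)))) (decode (snd (prod_decode (tlc e))))
   else if hdc e = 4 then Mu (decode (tlc e)) else Oracle)"
  by (subst decode.simps) (simp add: hdc_def tlc_def Let_def)

lemma decode_list_nz: "l \<noteq> 0 \<Longrightarrow> decode_list l = decode (hdc l) # decode_list (tlc l)"
  by (subst decode_list.simps) (simp add: hdc_def tlc_def)

lemma tlc_encl: "tlc (encl xs) = encl (drop 1 xs)"
  by (cases xs) auto

lemma sub_less: "e \<noteq> 0 \<Longrightarrow> fst (prod_decode (tlc e)) < e" "e \<noteq> 0 \<Longrightarrow> snd (prod_decode (tlc e)) < e"
  using pd3 pd4 by (auto simp: tlc_def)

definition rk :: "nat \<Rightarrow> nat" where "rk k = (if k = 2 then 1 else 0)"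
definition am :: "nat \<Rightarrow> nat \<Rightarrow> nat \<Rightarrow> nat" where "am k xs y = (if k = 2 then y else argc xs 0)"

definition RR where "RR = measures [fcx, fe, \<lambda>F. rk (fk F), \<lambda>F. am (fk F) (fxs F) (fy F)]"

lemma RR_intro:
  "c' < c \<or> c' = c \<and> (e' < e \<or> e' = e \<and> (rk k' < rk k \<or> rk k' = rk k \<and> am k' xs' y' < am k xs y))
   \<Longrightarrow> (fc k' c' e' xs' y', fc k c e xs y) \<in> RR"
  unfolding RR_def by (auto intro: measures_less measures_lesseq)

lemma decl_single: "decl (consc a 0) = [a]" by simp

lemma sound:
  assumes V: "valid Y L"
  shows "F \<in> facts L \<Longrightarrow> semc Y (fk F) (fcx F) (fe F) (fxs F) (fy F)"
proof (induction F rule: wf_induct[OF wf_measures[of "[fcx, fe, \<lambda>F. rk (fk F), \<lambda>F. am (fk F) (fxs F) (fy F)]"]])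
  case (1 F)
  define k c e xs y where "k = fk F" "c = fcx F" "e = fe F" "xs = fxs F" "y = fy F"
  have F: "F = fc k c e xs y" unfolding k_c_e_xs_y_def by (simp add: fc_comps)
  from 1(2) obtain ln where "ln \<in> set L" "fst (prod_decode ln) = F" unfolding facts_def by auto
  with V obtain w where L: "lineok Y (facts L) k c e xs y w"
    unfolding valid_def lnok_def Let_def F by auto
  have IH: "semc Y k' c' e' xs' y'" if "fc k' c' e' xs' y' \<in> facts L"
    "c' < c \<or> c' = c \<and> (e' < e \<or> e' = e \<and> (rk k' < rk k \<or> rk k' = rk k \<and> am k' xs' y' < am k xs y))"
    for k' c' e' xs' y'
    using 1(1)[rule_format, of "fc k' c' e' xs' y'"] RR_intro[OF that(2)] that(1)
    unfolding F RR_def by simp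
  from L have r1: "req1 k c e xs y w \<in> facts L" and r2: "req2 k c e xs y w \<in> facts L"
    and cn: "cnd Y k c e xs y" unfolding lineok_def by auto
  have ?case if k0: "k = 0"
  proof (cases "e = 0")
    case True
    then show ?thesis using cn k0 F by (simp add: cnd_def semc_def decode_codes)
  next
    case enz: False
    note dec = decode_nz[OF enz]
    show ?thesis
    proof -
      consider "hdc e = 0" | "hdc e = 1" | "hdc e = 2" | "hdc e = 3" | "hdc e = 4" | "hdc e > 4" by linarith
      then show ?thesis
      proof cases
        case 1 then show ?thesis using cn k0 enz F dec by (simp add: cnd_def semc_def argc_decl)
      next
        case 2 then show ?thesis using cn k0 enz F dec by (simp add: cnd_def semc_def argc_decl)
      next
        case 3
        define f l where "f = fst (prod_decode (tlc e))" "l = snd (prod_decode (tlc e))"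
        have a: "semc Y 1 c l xs w" using r1 3 k0 enz
          by (intro IH) (auto simp: req1_def f_l_def sub_less rk_def)
        have b: "semc Y 0 c f w y" using r2 3 k0 enz
          by (intro IH) (auto simp: req2_def f_l_def sub_less rk_def)
        show ?thesis using a b 3 k0 F dec unfolding f_l_def by (auto simp: semc_def)
      next
        case 4
        define f g where "f = fst (prod_decode (tlc e))" "g = snd (prod_decode (tlc e))"
        show ?thesis
        proof (cases "argc xs 0 = 0")
          case True
          have a: "semc Y 0 c f (tlc xs) y" using r1 4 k0 enz True
            by (intro IH) (auto simp: req1_def f_g_def sub_less rk_def)
          then show ?thesis using True 4 k0 F dec unfolding f_g_def
            by (auto simp: semc_def decl_tlc argc_decl intro: ev_PrimRec0)
        next
          case False
          then obtain n where n: "argc xs 0 = Suc n" by (cases "argc xs 0") auto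
          have a: "semc Y 0 c e (consc n (tlc xs)) w" using r1 4 k0 enz n
            by (intro IH) (auto simp: req1_def rk_def am_def argc_def)
          have b: "semc Y 0 c g (consc w (consc n (tlc xs))) y" using r2 4 k0 enz n
            by (intro IH) (auto simp: req2_def f_g_def sub_less rk_def)
          show ?thesis using a b n 4 k0 F dec unfolding f_g_def
            by (auto simp: semc_def decl_tlc argc_decl intro: ev_PrimRecS)
        qed
      next
        case 5
        have a: "semc Y 0 c (tlc e) (consc y xs) 0" using r1 5 k0 enz
          by (intro IH) (auto simp: req1_def rk_def tlc_less)
        have b: "semc Y 2 c (tlc e) xs y" using r2 5 k0 enz
          by (intro IH) (auto simp: req2_def rk_def tlc_less)
        show ?thesis using a b 5 k0 F dec by (auto simp: semc_def intro: ev_Mu)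
      next
        case 6
        then have dO: "decode e = Oracle" using dec by simp
        show ?thesis
        proof (cases "c = 0")
          case True
          then show ?thesis using cn k0 enz 6 F dO by (simp add: cnd_def semc_def orc_0 argc_decl)
        next
          case cnz: False
          define q where "q = argc xs 0"
          show ?thesis
          proof (cases "q mod 2 = 0")
            case True
            have a: "semc Y 0 (snd (prod_decode (hdc c))) (fst (prod_decode (hdc c))) (consc (q div 2) 0) y"
              using r1 6 k0 enz cnz True by (intro IH) (auto simp: req1_def q_def ctx_less)
            then have "Phi (fst (prod_decode (hdc c))) (orc Y (snd (prod_decode (hdc c)))) (q div 2) = Some y"
              by (simp add: semc_def Phi_Some)
            then have "orc Y c q = Some y" using True by (simp add: orc_nz[OF cnz] pjoin_def even_iff_mod_2_eq_zero)
            then show ?thesis using k0 F dO by (simp add: semc_def q_def argc_decl)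
          next
            case False
            have a: "semc Y 0 (snd (prod_decode (tlc c))) (fst (prod_decode (tlc c))) (consc (q div 2) 0) y"
              using r1 6 k0 enz cnz False by (intro IH) (auto simp: req1_def q_def ctx_less)
            then have "Phi (fst (prod_decode (tlc c))) (orc Y (snd (prod_decode (tlc c)))) (q div 2) = Some y"
              by (simp add: semc_def Phi_Some)
            then have "orc Y c q = Some y" using False by (simp add: orc_nz[OF cnz] pjoin_def even_iff_mod_2_eq_zero)
            then show ?thesis using k0 F dO by (simp add: semc_def q_def argc_decl)
          qed
        qed
      qed
    qed
  qed
  moreover have ?case if k1: "k = 1"
  proof (cases "e = 0")
    case True
    then show ?thesis using cn k1 F by (simp add: cnd_def semc_def decode_codes)
  next
    case enz: False
    then have ynz: "y \<noteq> 0" using cn k1 by (simp add: cnd_def)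
    have a: "semc Y 0 c (hdc e) xs (hdc y)" using r1 k1 enz
      by (intro IH) (auto simp: req1_def rk_def hdc_less)
    have b: "semc Y 1 c (tlc e) xs (tlc y)" using r2 k1 enz
      by (intro IH) (auto simp: req2_def rk_def tlc_less)
    have "decl y = hdc y # decl (tlc y)" using ynz by (subst decl.simps) simp
    then show ?thesis using a b k1 F enz by (simp add: semc_def decode_list_nz)
  qed
  moreover have ?case if k2: "k = 2"
  proof (cases "y = 0")
    case True
    then show ?thesis using k2 F by (simp add: semc_def)
  next
    case ynz: False
    have a: "semc Y 2 c e xs (y - 1)" using r1 k2 ynz
      by (intro IH) (auto simp: req1_def rk_def am_def)
    have b: "semc Y 0 c e (consc (y - 1) xs) (Suc w)" using r2 k2 ynz
      by (intro IH) (auto simp: req2_def rk_def)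
    have "\<forall>m<y. \<exists>k. ev (orc Y c) (decode e) (m # decl xs) (Suc k)"
    proof (intro allI impI)
      fix m assume "m < y"
      then consider "m < y - 1" | "m = y - 1" by linarith
      then show "\<exists>k. ev (orc Y c) (decode e) (m # decl xs) (Suc k)"
        using a b by cases (auto simp: semc_def)
    qed
    then show ?thesis using k2 F by (simp add: semc_def)
  qed
  moreover have "k \<le> 2" using cn by (auto simp: cnd_def split: if_splits)
  ultimately show ?case unfolding k_c_e_xs_y_def by linarith
qed

lemma decode_inv:
  "decode e = Zero \<Longrightarrow> e = 0"
  "decode e = Succ \<Longrightarrow> e \<noteq> 0 \<and> hdc e = 0"
  "decode e = Proj i \<Longrightarrow> e \<noteq> 0 \<and> hdc e = 1 \<and> tlc e = i"
  "decode e = Comp f gs \<Longrightarrow> e \<noteq> 0 \<and> hdc e = 2 \<and> decode (fst (prod_decode (tlc e))) = f \<and> decode_list (snd (prod_decode (tlc e))) = gs"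
  "decode e = PrimRec f g \<Longrightarrow> e \<noteq> 0 \<and> hdc e = 3 \<and> decode (fst (prod_decode (tlc e))) = f \<and> decode (snd (prod_decode (tlc e))) = g"
  "decode e = Mu f \<Longrightarrow> e \<noteq> 0 \<and> hdc e = 4 \<and> decode (tlc e) = f"
  "decode e = Oracle \<Longrightarrow> e \<noteq> 0 \<and> hdc e > 4"
  by (cases "e = 0"; simp add: decode_codes decode_nz split: if_splits)+

lemma decode_list_inv:
  "decode_list l = [] \<Longrightarrow> l = 0"
  "decode_list l = g # gs \<Longrightarrow> l \<noteq> 0 \<and> decode (hdc l) = g \<and> decode_list (tlc l) = gs"
  by (cases "l = 0"; simp add: decode_codes decode_list_nz)+

lemma addline:
  assumes "valid Y L" "req1 k c e xs y w \<in> insert (fc k c e xs y) (facts L)"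
    "req2 k c e xs y w \<in> insert (fc k c e xs y) (facts L)" "cnd Y k c e xs y"
  shows "\<exists>L'. valid Y L' \<and> fc k c e xs y \<in> facts L'"
  using valid_addl[of Y L k c e xs y w] assms unfolding lineok_def by blast

lemma complete:
  "ev (orc Y c) p xs y \<Longrightarrow> decode e = p \<Longrightarrow> \<exists>L. valid Y L \<and> fc 0 c e (encl xs) y \<in> facts L"
proof (induction c arbitrary: p xs y e rule: less_induct)
  case (less c)
  have main: "ev (orc Y c) p xs y \<Longrightarrow> \<forall>e. decode e = p \<longrightarrow> (\<exists>L. valid Y L \<and> fc 0 c e (encl xs) y \<in> facts L)"
    for p xs y
  proof (induction rule: ev.induct)
    case (ev_Zero xs)
    show ?case
    proof (intro allI impI)
      fix e assume "decode e = Zero"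
      then have "e = 0" by (rule decode_inv)
      then show "\<exists>L. valid Y L \<and> fc 0 c e (encl xs) 0 \<in> facts L"
        by (intro addline[OF valid_Nil, where w=0]) (simp_all add: req1_def req2_def cnd_def)
    qed
  next
    case (ev_Succ xs)
    show ?case
    proof (intro allI impI)
      fix e assume "decode e = Succ"
      then have "e \<noteq> 0" "hdc e = 0" using decode_inv by auto
      then show "\<exists>L. valid Y L \<and> fc 0 c e (encl xs) (Suc (arg xs 0)) \<in> facts L"
        by (intro addline[OF valid_Nil, where w=0]) (simp_all add: req1_def req2_def cnd_def argc_encl)
    qed
  next
    case (ev_Proj i xs)
    show ?case
    proof (intro allI impI)
      fix e assume "decode e = Proj i"
      then have "e \<noteq> 0" "hdc e = 1" "tlc e = i" using decode_inv by auto
      then show "\<exists>L. valid Y L \<and> fc 0 c e (encl xs) (arg xs i) \<in> facts L"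
        by (intro addline[OF valid_Nil, where w=0]) (simp_all add: req1_def req2_def cnd_def argc_encl)
    qed
  next
    case (ev_Comp xs gs ys f z)
    show ?case
    proof (intro allI impI)
      fix e assume de: "decode e = Comp f gs"
      then have d: "e \<noteq> 0" "hdc e = 2" "decode (fst (prod_decode (tlc e))) = f"
        "decode_list (snd (prod_decode (tlc e))) = gs" using decode_inv(4) by auto
      have LL: "list_all2 (\<lambda>g y. ev (orc Y c) g xs y \<and> (\<forall>e. decode e = g \<longrightarrow> (\<exists>L. valid Y L \<and> fc 0 c e (encl xs) y \<in> facts L))) gs' zs
         \<Longrightarrow> decode_list l = gs' \<Longrightarrow> \<exists>L. valid Y L \<and> fc 1 c l (encl xs) (encl zs) \<in> facts L" for gs' zs l
      proof (induction gs' arbitrary: zs l)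
        case Nil
        then have "l = 0" "zs = []" using decode_list_inv by auto
        then show ?case
          by (intro addline[OF valid_Nil, where w=0]) (simp_all add: req1_def req2_def cnd_def)
      next
        case (Cons g gs')
        then obtain z' zs' where zs: "zs = z' # zs'" by (cases zs) auto
        from Cons.prems have l: "l \<noteq> 0" "decode (hdc l) = g" "decode_list (tlc l) = gs'"
          using decode_list_inv(2) by auto
        from Cons.prems(1) zs obtain L1 where L1: "valid Y L1" "fc 0 c (hdc l) (encl xs) z' \<in> facts L1"
          using l by auto
        from Cons.IH[of zs' "tlc l"] Cons.prems(1) zs l obtain L2 where
          L2: "valid Y L2" "fc 1 c (tlc l) (encl xs) (encl zs') \<in> facts L2" by auto
        show ?case
          using L1 L2 l zs
          by (intro addline[OF valid_append[OF L1(1) L2(1)], where w=0])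
             (simp_all add: req1_def req2_def cnd_def)
      qed
      obtain L1 where L1: "valid Y L1" "fc 1 c (snd (prod_decode (tlc e))) (encl xs) (encl ys) \<in> facts L1"
        using LL[OF ev_Comp(1) d(4)] by auto
      obtain L2 where L2: "valid Y L2" "fc 0 c (fst (prod_decode (tlc e))) (encl ys) z \<in> facts L2"
        using ev_Comp.IH d(3) by auto
      show "\<exists>L. valid Y L \<and> fc 0 c e (encl xs) z \<in> facts L"
        using L1 L2 d
        by (intro addline[OF valid_append[OF L1(1) L2(1)], where w="encl ys"])
           (simp_all add: req1_def req2_def cnd_def)
    qed
  next
    case (ev_PrimRec0 xs f y g)
    show ?case
    proof (intro allI impI)
      fix e assume "decode e = PrimRec f g"
      then have d: "e \<noteq> 0" "hdc e = 3" "decode (fst (prod_decode (tlc e))) = f"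
        "decode (snd (prod_decode (tlc e))) = g" using decode_inv(5) by auto
      obtain L1 where L1: "valid Y L1" "fc 0 c (fst (prod_decode (tlc e))) (encl (drop 1 xs)) y \<in> facts L1"
        using ev_PrimRec0(3) d(3) by auto
      show "\<exists>L. valid Y L \<and> fc 0 c e (encl xs) y \<in> facts L"
        using L1 d ev_PrimRec0(1)
        by (intro addline[OF L1(1), where w=0])
           (simp_all add: req1_def req2_def cnd_def argc_encl tlc_encl)
    qed
  next
    case (ev_PrimRecS xs n f g y z)
    show ?case
    proof (intro allI impI)
      fix e assume de: "decode e = PrimRec f g"
      then have d: "e \<noteq> 0" "hdc e = 3" "decode (fst (prod_decode (tlc e))) = f"
        "decode (snd (prod_decode (tlc e))) = g" using decode_inv(5) by auto
      obtain L1 where L1: "valid Y L1" "fc 0 c e (encl (n # drop 1 xs)) y \<in> facts L1"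
        using ev_PrimRecS.IH(1) de by auto
      obtain L2 where L2: "valid Y L2" "fc 0 c (snd (prod_decode (tlc e))) (encl (y # n # drop 1 xs)) z \<in> facts L2"
        using ev_PrimRecS.IH(2) d(4) by auto
      show "\<exists>L. valid Y L \<and> fc 0 c e (encl xs) z \<in> facts L"
        using L1 L2 d ev_PrimRecS(1)
        by (intro addline[OF valid_append[OF L1(1) L2(1)], where w=y])
           (simp_all add: req1_def req2_def cnd_def argc_encl tlc_encl)
    qed
  next
    case (ev_Mu f n xs)
    show ?case
    proof (intro allI impI)
      fix e assume "decode e = Mu f"
      then have d: "e \<noteq> 0" "hdc e = 4" "decode (tlc e) = f" using decode_inv(6) by auto
      have MM: "m \<le> n \<Longrightarrow> \<exists>L. valid Y L \<and> fc 2 c (tlc e) (encl xs) m \<in> facts L" for m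
      proof (induction m)
        case 0
        then show ?case
          by (intro addline[OF valid_Nil, where w=0]) (simp_all add: req1_def req2_def cnd_def)
      next
        case (Suc m)
        then obtain L1 where L1: "valid Y L1" "fc 2 c (tlc e) (encl xs) m \<in> facts L1" by auto
        from Suc.prems have "m < n" by simp
        with ev_Mu(3) obtain k where "\<forall>e. decode e = f \<longrightarrow>
           (\<exists>L. valid Y L \<and> fc 0 c e (encl (m # xs)) (Suc k) \<in> facts L)" by auto
        with d obtain L2 where L2: "valid Y L2" "fc 0 c (tlc e) (encl (m # xs)) (Suc k) \<in> facts L2" by auto
        show ?case
          using L1 L2
          by (intro addline[OF valid_append[OF L1(1) L2(1)], where w=k])
             (simp_all add: req1_def req2_def cnd_def)
      qed
      obtain L1 where L1: "valid Y L1" "fc 2 c (tlc e) (encl xs) n \<in> facts L1" using MM by auto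
      obtain L2 where L2: "valid Y L2" "fc 0 c (tlc e) (encl (n # xs)) 0 \<in> facts L2"
        using ev_Mu(2) d by auto
      show "\<exists>L. valid Y L \<and> fc 0 c e (encl xs) n \<in> facts L"
        using L1 L2 d
        by (intro addline[OF valid_append[OF L1(1) L2(1)], where w=0])
           (simp_all add: req1_def req2_def cnd_def)
    qed
  next
    case (ev_Oracle xs y)
    show ?case
    proof (intro allI impI)
      fix e assume "decode e = Oracle"
      then have d: "e \<noteq> 0" "hdc e > 4" using decode_inv(7) by auto
      show "\<exists>L. valid Y L \<and> fc 0 c e (encl xs) y \<in> facts L"
      proof (cases "c = 0")
        case True
        then show ?thesis using ev_Oracle d
          by (intro addline[OF valid_Nil, where w=0])
             (simp_all add: req1_def req2_def cnd_def argc_encl orc_0)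
      next
        case cnz: False
        define q where "q = arg xs 0"
        show ?thesis
        proof (cases "q mod 2 = 0")
          case True
          have "Phi (fst (prod_decode (hdc c))) (orc Y (snd (prod_decode (hdc c)))) (q div 2) = Some y"
            using ev_Oracle True unfolding q_def by (simp add: orc_nz[OF cnz] pjoin_def even_iff_mod_2_eq_zero)
          then have "ev (orc Y (snd (prod_decode (hdc c)))) (decode (fst (prod_decode (hdc c)))) [q div 2] y"
            by (simp add: Phi_Some)
          from less.IH[OF ctx_less(1)[OF cnz] this refl] obtain L1 where
            L1: "valid Y L1" "fc 0 (snd (prod_decode (hdc c))) (fst (prod_decode (hdc c))) (encl [q div 2]) y \<in> facts L1"
            by auto
          show ?thesis using L1 d cnz True
            by (intro addline[OF L1(1), where w=0])
               (simp_all add: req1_def req2_def cnd_def argc_encl q_def)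
        next
          case False
          have "Phi (fst (prod_decode (tlc c))) (orc Y (snd (prod_decode (tlc c)))) (q div 2) = Some y"
            using ev_Oracle False unfolding q_def by (simp add: orc_nz[OF cnz] pjoin_def even_iff_mod_2_eq_zero)
          then have "ev (orc Y (snd (prod_decode (tlc c)))) (decode (fst (prod_decode (tlc c)))) [q div 2] y"
            by (simp add: Phi_Some)
          from less.IH[OF ctx_less(2)[OF cnz] this refl] obtain L1 where
            L1: "valid Y L1" "fc 0 (snd (prod_decode (tlc c))) (fst (prod_decode (tlc c))) (encl [q div 2]) y \<in> facts L1"
            by auto
          show ?thesis using L1 d cnz False
            by (intro addline[OF L1(1), where w=0])
               (simp_all add: req1_def req2_def cnd_def argc_encl q_def)
        qed
      qed
    qed
  qed
  then show ?case using less.prems by blast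
qed

lemma tlc_pow_0: "(tlc ^^ i) 0 = 0"
  by (induction i) auto

lemma decl_len: "length (decl t) \<le> t"
proof (induction t rule: less_induct)
  case (less t)
  show ?case
  proof (cases "t = 0")
    case False
    then have "length (decl (tlc t)) \<le> tlc t" using less tlc_less by blast
    then show ?thesis using False tlc_less[OF False] by (subst decl.simps) simp
  qed simp
qed

lemma decl_nz: "t \<noteq> 0 \<Longrightarrow> decl t = hdc t # decl (tlc t)"
  by (subst decl.simps) simp

lemma decl_nth: "(i < length (decl t) \<longleftrightarrow> (tlc ^^ i) t \<noteq> 0) \<and>
   (i < length (decl t) \<longrightarrow> decl t ! i = hdc ((tlc ^^ i) t))"
proof (induction i arbitrary: t)
  case 0 then show ?case by (cases "t = 0") (auto simp: decl_nz)
next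
  case (Suc i)
  show ?case
  proof (cases "t = 0")
    case True then show ?thesis by (simp add: tlc_pow_0 funpow_swap1)
  next
    case False
    then show ?thesis using Suc[of "tlc t"] by (simp add: decl_nz funpow_swap1)
  qed
qed

lemma set_decl: "x \<in> set (decl t) \<longleftrightarrow> (\<exists>i<t. (tlc ^^ i) t \<noteq> 0 \<and> x = hdc ((tlc ^^ i) t))"
proof
  assume "x \<in> set (decl t)"
  then obtain i where "i < length (decl t)" "x = decl t ! i" by (auto simp: in_set_conv_nth)
  then show "\<exists>i<t. (tlc ^^ i) t \<noteq> 0 \<and> x = hdc ((tlc ^^ i) t)"
    using decl_nth[of i t] decl_len[of t] by (intro exI[of _ i]) auto
next
  assume "\<exists>i<t. (tlc ^^ i) t \<noteq> 0 \<and> x = hdc ((tlc ^^ i) t)"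
  then obtain i where "(tlc ^^ i) t \<noteq> 0" "x = hdc ((tlc ^^ i) t)" by auto
  then show "x \<in> set (decl t)" using decl_nth[of i t] by (auto simp: in_set_conv_nth)
qed

definition "NORM = Comp IFZ [Proj 0, Zero, konst 1]"
lemma rep_NORM[rep_rules]: "rep ora NORM (\<lambda>xs. if arg xs 0 = 0 then 0 else 1)"
  unfolding NORM_def by (rule rep_cong, (rule rep_rules)+) simp

definition "MEMB = Comp IFZ [Comp ITL [Proj 0, Proj 2], konst 1,
   Comp EQN [Comp PD1 [Comp HD [Comp ITL [Proj 0, Proj 2]]], Proj 1]]"
definition "MEM = Comp NORM [Comp (BPROD2 MEMB) [Proj 1, Proj 0, Proj 1]]"

lemma facts_decl_iff: "X \<in> facts (decl t) \<longleftrightarrow> (\<exists>j<t. 0 < (tlc ^^ j) t \<and> X = fst (prod_decode (hdc ((tlc ^^ j) t))))"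
proof
  assume "X \<in> facts (decl t)"
  then obtain x where "x \<in> set (decl t)" "X = fst (prod_decode x)" unfolding facts_def by auto
  then show "\<exists>j<t. 0 < (tlc ^^ j) t \<and> X = fst (prod_decode (hdc ((tlc ^^ j) t)))"
    unfolding set_decl by auto
next
  assume "\<exists>j<t. 0 < (tlc ^^ j) t \<and> X = fst (prod_decode (hdc ((tlc ^^ j) t)))"
  then obtain j where j: "j < t" "0 < (tlc ^^ j) t" "X = fst (prod_decode (hdc ((tlc ^^ j) t)))" by auto
  then have "hdc ((tlc ^^ j) t) \<in> set (decl t)" unfolding set_decl by auto
  then show "X \<in> facts (decl t)" using j(3) unfolding facts_def by auto
qed

lemma rep_MEM[rep_rules]: "rep ora MEM (\<lambda>xs. if arg xs 0 \<in> facts (decl (arg xs 1)) then 0 else 1)"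
  unfolding MEM_def MEMB_def
  apply (rule rep_cong, (rule rep_rules)+)
  apply (auto simp: facts_decl_iff)
  by (metis lessThan_iff less_irrefl)

definition "FC = Comp PE [Proj 0, Comp PE [Proj 1, Comp PE [Proj 2, Comp PE [Proj 3, Proj 4]]]]"
lemma rep_FC[rep_rules]: "rep ora FC (\<lambda>xs. fc (arg xs 0) (arg xs 1) (arg xs 2) (arg xs 3) (arg xs 4))"
  unfolding FC_def by (rule rep_cong, (rule rep_rules)+) (simp add: fc_def)

definition "EQB = Comp NORM [EQN]"
lemma rep_EQB[rep_rules]: "rep ora EQB (\<lambda>xs. if arg xs 0 = arg xs 1 then 0 else 1)"
  unfolding EQB_def by (rule rep_cong, (rule rep_rules)+) simp

definition "SELF6 = (Comp FC [(Proj 0), (Proj 1), (Proj 2), (Proj 3), (Proj 4)])"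
lemma rep_SELF6[rep_rules]: "rep ora SELF6 (\<lambda>xs. fc (arg xs 0) (arg xs 1) (arg xs 2) (arg xs 3) (arg xs 4))"
  unfolding SELF6_def by (rule rep_cong, (rule rep_rules)+) (simp add: argc_def)

definition "HE6 = (Comp HD [(Proj 2)])"
lemma rep_HE6[rep_rules]: "rep ora HE6 (\<lambda>xs. hdc (arg xs 2))"
  unfolding HE6_def by (rule rep_cong, (rule rep_rules)+) (simp add: argc_def)

definition "TE6 = (Comp TL [(Proj 2)])"
lemma rep_TE6[rep_rules]: "rep ora TE6 (\<lambda>xs. tlc (arg xs 2))"
  unfolding TE6_def by (rule rep_cong, (rule rep_rules)+) (simp add: argc_def)

definition "A06 = (Comp ARGC [(Proj 3), Zero])"
lemma rep_A06[rep_rules]: "rep ora A06 (\<lambda>xs. argc (arg xs 3) 0)"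
  unfolding A06_def by (rule rep_cong, (rule rep_rules)+) (simp add: argc_def)

definition "R1b = (Comp FC [(konst 1), (Proj 1), (Comp PD2 [TE6]), (Proj 3), (Proj 5)])"
lemma rep_R1b[rep_rules]: "rep ora R1b (\<lambda>xs. fc 1 (arg xs 1) (snd (prod_decode (tlc (arg xs 2)))) (arg xs 3) (arg xs 5))"
  unfolding R1b_def by (rule rep_cong, (rule rep_rules)+) (simp add: argc_def)

definition "R1c = (Comp FC [Zero, (Proj 1), (Comp PD1 [TE6]), (Comp TL [(Proj 3)]), (Proj 4)])"
lemma rep_R1c[rep_rules]: "rep ora R1c (\<lambda>xs. fc 0 (arg xs 1) (fst (prod_decode (tlc (arg xs 2)))) (tlc (arg xs 3)) (arg xs 4))"
  unfolding R1c_def by (rule rep_cong, (rule rep_rules)+) (simp add: argc_def)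

definition "R1d = (Comp FC [Zero, (Proj 1), (Proj 2), (Comp CONS [(Comp PRED [A06]), (Comp TL [(Proj 3)])]), (Proj 5)])"
lemma rep_R1d[rep_rules]: "rep ora R1d (\<lambda>xs. fc 0 (arg xs 1) (arg xs 2) (consc (argc (arg xs 3) 0 - 1) (tlc (arg xs 3))) (arg xs 5))"
  unfolding R1d_def by (rule rep_cong, (rule rep_rules)+) (simp add: argc_def)

definition "R1e = (Comp FC [Zero, (Proj 1), TE6, (Comp CONS [(Proj 4), (Proj 3)]), Zero])"
lemma rep_R1e[rep_rules]: "rep ora R1e (\<lambda>xs. fc 0 (arg xs 1) (tlc (arg xs 2)) (consc (arg xs 4) (arg xs 3)) 0)"
  unfolding R1e_def by (rule rep_cong, (rule rep_rules)+) (simp add: argc_def)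

definition "R1f = (Comp FC [Zero, (Comp PD2 [(Comp HD [(Proj 1)])]), (Comp PD1 [(Comp HD [(Proj 1)])]), (Comp CONS [(Comp HALF [A06]), Zero]), (Proj 4)])"
lemma rep_R1f[rep_rules]: "rep ora R1f (\<lambda>xs. fc 0 (snd (prod_decode (hdc (arg xs 1)))) (fst (prod_decode (hdc (arg xs 1)))) (consc (argc (arg xs 3) 0 div 2) 0) (arg xs 4))"
  unfolding R1f_def by (rule rep_cong, (rule rep_rules)+) (simp add: argc_def)

definition "R1g = (Comp FC [Zero, (Comp PD2 [(Comp TL [(Proj 1)])]), (Comp PD1 [(Comp TL [(Proj 1)])]), (Comp CONS [(Comp HALF [A06]), Zero]), (Proj 4)])"
lemma rep_R1g[rep_rules]: "rep ora R1g (\<lambda>xs. fc 0 (snd (prod_decode (tlc (arg xs 1)))) (fst (prod_decode (tlc (arg xs 1)))) (consc (argc (arg xs 3) 0 div 2) 0) (arg xs 4))"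
  unfolding R1g_def by (rule rep_cong, (rule rep_rules)+) (simp add: argc_def)

definition "R1h = (Comp FC [Zero, (Proj 1), HE6, (Proj 3), (Comp HD [(Proj 4)])])"
lemma rep_R1h[rep_rules]: "rep ora R1h (\<lambda>xs. fc 0 (arg xs 1) (hdc (arg xs 2)) (arg xs 3) (hdc (arg xs 4)))"
  unfolding R1h_def by (rule rep_cong, (rule rep_rules)+) (simp add: argc_def)

definition "R1i = (Comp FC [(konst 2), (Proj 1), (Proj 2), (Proj 3), (Comp PRED [(Proj 4)])])"
lemma rep_R1i[rep_rules]: "rep ora R1i (\<lambda>xs. fc 2 (arg xs 1) (arg xs 2) (arg xs 3) (arg xs 4 - 1))"
  unfolding R1i_def by (rule rep_cong, (rule rep_rules)+) (simp add: argc_def)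

definition "R2b = (Comp FC [Zero, (Proj 1), (Comp PD1 [TE6]), (Proj 5), (Proj 4)])"
lemma rep_R2b[rep_rules]: "rep ora R2b (\<lambda>xs. fc 0 (arg xs 1) (fst (prod_decode (tlc (arg xs 2)))) (arg xs 5) (arg xs 4))"
  unfolding R2b_def by (rule rep_cong, (rule rep_rules)+) (simp add: argc_def)

definition "R2c = (Comp FC [Zero, (Proj 1), (Comp PD2 [TE6]), (Comp CONS [(Proj 5), (Comp CONS [(Comp PRED [A06]), (Comp TL [(Proj 3)])])]), (Proj 4)])"
lemma rep_R2c[rep_rules]: "rep ora R2c (\<lambda>xs. fc 0 (arg xs 1) (snd (prod_decode (tlc (arg xs 2)))) (consc (arg xs 5) (consc (argc (arg xs 3) 0 - 1) (tlc (arg xs 3)))) (arg xs 4))"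
  unfolding R2c_def by (rule rep_cong, (rule rep_rules)+) (simp add: argc_def)

definition "R2d = (Comp FC [(konst 2), (Proj 1), TE6, (Proj 3), (Proj 4)])"
lemma rep_R2d[rep_rules]: "rep ora R2d (\<lambda>xs. fc 2 (arg xs 1) (tlc (arg xs 2)) (arg xs 3) (arg xs 4))"
  unfolding R2d_def by (rule rep_cong, (rule rep_rules)+) (simp add: argc_def)

definition "R2e = (Comp FC [(konst 1), (Proj 1), TE6, (Proj 3), (Comp TL [(Proj 4)])])"
lemma rep_R2e[rep_rules]: "rep ora R2e (\<lambda>xs. fc 1 (arg xs 1) (tlc (arg xs 2)) (arg xs 3) (tlc (arg xs 4)))"
  unfolding R2e_def by (rule rep_cong, (rule rep_rules)+) (simp add: argc_def)

definition "R2f = (Comp FC [Zero, (Proj 1), (Proj 2), (Comp CONS [(Comp PRED [(Proj 4)]), (Proj 3)]), (Comp Succ [(Proj 5)])])"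
lemma rep_R2f[rep_rules]: "rep ora R2f (\<lambda>xs. fc 0 (arg xs 1) (arg xs 2) (consc (arg xs 4 - 1) (arg xs 3)) (Suc (arg xs 5)))"
  unfolding R2f_def by (rule rep_cong, (rule rep_rules)+) (simp add: argc_def)

named_theorems rep_app

lemma rep_IFZ_app[rep_app]: "rep ora a A \<Longrightarrow> rep ora b B \<Longrightarrow> rep ora c C \<Longrightarrow>
  rep ora (Comp IFZ [a, b, c]) (\<lambda>xs. if A xs = 0 then B xs else C xs)"
  by (rule rep_cong, (rule rep_rules | assumption)+) simp
lemma rep_EQB_app[rep_app]: "rep ora a A \<Longrightarrow> rep ora b B \<Longrightarrow>
  rep ora (Comp EQB [a, b]) (\<lambda>xs. if A xs = B xs then 0 else 1)"
  by (rule rep_cong, (rule rep_rules | assumption)+) simp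
lemma rep_MONUS_app[rep_app]: "rep ora a A \<Longrightarrow> rep ora b B \<Longrightarrow>
  rep ora (Comp MONUS [a, b]) (\<lambda>xs. A xs - B xs)"
  by (rule rep_cong, (rule rep_rules | assumption)+) simp
lemma rep_ARGC_app[rep_app]: "rep ora a A \<Longrightarrow> rep ora b B \<Longrightarrow>
  rep ora (Comp ARGC [a, b]) (\<lambda>xs. argc (A xs) (B xs))"
  by (rule rep_cong, (rule rep_rules | assumption)+) simp

lemma if01_eq0: "((if P then 0 else 1) = (0::nat)) = P" by simp
lemma if_eq0_distrib: "((if P then a else b) = (0::nat)) = (if P then a = 0 else b = 0)" by simp

definition "REQ1 = (Comp IFZ [(Proj 0), (Comp IFZ [(Proj 2), SELF6, (Comp IFZ [HE6, SELF6, (Comp IFZ [(Comp EQB [HE6, (konst 1)]), SELF6, (Comp IFZ [(Comp EQB [HE6, (konst 2)]), R1b, (Comp IFZ [(Comp EQB [HE6, (konst 3)]), (Comp IFZ [A06, R1c, R1d]), (Comp IFZ [(Comp EQB [HE6, (konst 4)]), R1e, (Comp IFZ [(Proj 1), SELF6, (Comp IFZ [(Comp PAR [A06]), R1f, R1g])])])])])])])]), (Comp IFZ [(Comp EQB [(Proj 0), (konst 1)]), (Comp IFZ [(Proj 2), SELF6, R1h]), (Comp IFZ [(Comp EQB [(Proj 0), (konst 2)]), (Comp IFZ [(Proj 4), SELF6, R1i]), SELF6])])])"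
lemma rep_REQ1[rep_rules]: "rep ora REQ1 (\<lambda>xs. req1 (arg xs 0) (arg xs 1) (arg xs 2) (arg xs 3) (arg xs 4) (arg xs 5))"
  unfolding REQ1_def by (rule rep_cong, (rule rep_app | rule rep_rules)+) (simp add: req1_def argc_def if01_eq0)

definition "REQ2 = (Comp IFZ [(Proj 0), (Comp IFZ [(Proj 2), SELF6, (Comp IFZ [(Comp EQB [HE6, (konst 2)]), R2b, (Comp IFZ [(Comp EQB [HE6, (konst 3)]), (Comp IFZ [A06, SELF6, R2c]), (Comp IFZ [(Comp EQB [HE6, (konst 4)]), R2d, SELF6])])])]), (Comp IFZ [(Comp EQB [(Proj 0), (konst 1)]), (Comp IFZ [(Proj 2), SELF6, R2e]), (Comp IFZ [(Comp EQB [(Proj 0), (konst 2)]), (Comp IFZ [(Proj 4), SELF6, R2f]), SELF6])])])"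
lemma rep_REQ2[rep_rules]: "rep ora REQ2 (\<lambda>xs. req2 (arg xs 0) (arg xs 1) (arg xs 2) (arg xs 3) (arg xs 4) (arg xs 5))"
  unfolding REQ2_def by (rule rep_cong, (rule rep_app | rule rep_rules)+) (simp add: req2_def argc_def if01_eq0)

definition "CND = Comp NORM [(Comp IFZ [(Proj 0), (Comp IFZ [(Proj 2), (Proj 4), (Comp IFZ [HE6, (Comp EQB [(Proj 4), (Comp Succ [A06])]), (Comp IFZ [(Comp EQB [HE6, (konst 1)]), (Comp EQB [(Proj 4), (Comp ARGC [(Proj 3), TE6])]), (Comp IFZ [(Comp MONUS [HE6, (konst 4)]), Zero, (Comp IFZ [(Proj 1), (Comp EQB [(Proj 4), (Comp Oracle [A06])]), Zero])])])])]), (Comp IFZ [(Comp EQB [(Proj 0), (konst 1)]), (Comp IFZ [(Proj 2), (Proj 4), (Comp IFZ [(Proj 4), (konst 1), Zero])]), (Comp EQB [(Proj 0), (konst 2)])])])]"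
lemma rep_CND[rep_rules]: "rep (Some \<circ> chi Y) CND (\<lambda>xs. if cnd Y (arg xs 0) (arg xs 1) (arg xs 2) (arg xs 3) (arg xs 4) then 0 else 1)"
  unfolding CND_def by (rule rep_cong, (rule rep_app | rule rep_rules)+) (simp add: cnd_def argc_def if01_eq0)
definition "FK = Comp PD1 [Proj 0]"
definition "FCX = Comp PD1 [Comp PD2 [Proj 0]]"
definition "FE = Comp PD1 [Comp PD2 [Comp PD2 [Proj 0]]]"
definition "FXS = Comp PD1 [Comp PD2 [Comp PD2 [Comp PD2 [Proj 0]]]]"
definition "FY = Comp PD2 [Comp PD2 [Comp PD2 [Comp PD2 [Proj 0]]]]"
lemma rep_Fcomps[rep_rules]:
  "rep ora FK (\<lambda>xs. fk (arg xs 0))" "rep ora FCX (\<lambda>xs. fcx (arg xs 0))" "rep ora FE (\<lambda>xs. fe (arg xs 0))"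
  "rep ora FXS (\<lambda>xs. fxs (arg xs 0))" "rep ora FY (\<lambda>xs. fy (arg xs 0))"
  unfolding FK_def FCX_def FE_def FXS_def FY_def
  by (rule rep_cong, (rule rep_rules)+, simp add: fk_def fcx_def fe_def fxs_def fy_def)+

definition "LARGS = [Comp FK [Comp PD1 [Proj 0]], Comp FCX [Comp PD1 [Proj 0]], Comp FE [Comp PD1 [Proj 0]],
  Comp FXS [Comp PD1 [Proj 0]], Comp FY [Comp PD1 [Proj 0]], Comp PD2 [Proj 0]]"
definition "LNOK = Comp NORM [Comp ADD [Comp ADD [Comp MEM [Comp REQ1 LARGS, Proj 1], Comp MEM [Comp REQ2 LARGS, Proj 1]],
   Comp CND LARGS]]"

lemma rep_LNOK[rep_rules]: "rep (Some \<circ> chi Y) LNOK (\<lambda>xs. if lnok Y (facts (decl (arg xs 1))) (arg xs 0) then 0 else 1)"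
  unfolding LNOK_def LARGS_def
  by (rule rep_cong, (rule rep_app | rule rep_rules)+) (simp add: lnok_def lineok_def Let_def)

definition "VB = Comp IFZ [Comp ITL [Proj 0, Proj 1], Zero, Comp LNOK [Comp HD [Comp ITL [Proj 0, Proj 1]], Proj 1]]"
definition "VALID = Comp NORM [Comp (BSUM2 VB) [Proj 0, Proj 0, Proj 0]]"

lemma valid_decl_iff: "valid Y (decl t) \<longleftrightarrow> (\<forall>i<t. (tlc ^^ i) t \<noteq> 0 \<longrightarrow> lnok Y (facts (decl t)) (hdc ((tlc ^^ i) t)))"
  unfolding valid_def Ball_def set_decl by blast

lemma rep_VALID[rep_rules]: "rep (Some \<circ> chi Y) VALID (\<lambda>xs. if valid Y (decl (arg xs 0)) then 0 else 1)"
  unfolding VALID_def VB_def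
  apply (rule rep_cong, (rule rep_app | rule rep_rules)+)
  apply (simp add: valid_decl_iff)
  apply (intro conjI impI allI; clarsimp)
  apply (metis lessThan_iff neq0_conv)
  done

primrec ctxk :: "nat \<Rightarrow> nat \<Rightarrow> nat \<Rightarrow> nat \<Rightarrow> nat" where
  "ctxk qS qZ eS 0 = 0"
| "ctxk qS qZ eS (Suc n) = jctx qS 0 (if n = 0 then qZ else eS) (ctxk qS qZ eS n)"

definition progk :: "nat \<Rightarrow> nat \<Rightarrow> nat \<Rightarrow> nat" where
  "progk qZ eS k = (if k = 0 then qZ else eS)"

definition "JC = Comp CONS [Comp PE [Proj 0, Proj 1], Comp PE [Proj 2, Proj 3]]"
lemma rep_JC[rep_rules]: "rep ora JC (\<lambda>xs. jctx (arg xs 0) (arg xs 1) (arg xs 2) (arg xs 3))"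
  unfolding JC_def by (rule rep_cong, (rule rep_rules)+) (simp add: jctx_def)

definition "CTXP qS qZ eS = PrimRec Zero (Comp JC [konst qS, Zero, Comp IFZ [Proj 1, konst qZ, konst eS], Proj 0])"
lemma rep_CTXP[rep_rules]: "rep ora (CTXP qS qZ eS) (\<lambda>xs. ctxk qS qZ eS (arg xs 0))"
  unfolding CTXP_def
  by (rule rep_cong[OF rep_PrimRec_gen[where H="\<lambda>n r. ctxk qS qZ eS n"]], (rule rep_rules)+) simp_all

definition "CKP qS qZ eS qG = Comp JC [konst qG, Zero, Comp IFZ [Proj 0, konst qZ, konst eS], Comp (CTXP qS qZ eS) [Proj 0]]"
lemma rep_CKP[rep_rules]: "rep ora (CKP qS qZ eS qG) (\<lambda>xs. jctx qG 0 (progk qZ eS (arg xs 0)) (ctxk qS qZ eS (arg xs 0)))"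
  unfolding CKP_def by (rule rep_cong, (rule rep_rules)+) (simp add: progk_def)

definition "FAP qS qZ eS qG eG p a = Comp FC [Zero, CKP qS qZ eS qG, konst eG, konst (encl [p]), konst a]"
lemma rep_FAP[rep_rules]: "rep ora (FAP qS qZ eS qG eG p a)
   (\<lambda>xs. fc 0 (jctx qG 0 (progk qZ eS (arg xs 0)) (ctxk qS qZ eS (arg xs 0))) eG (encl [p]) a)"
  unfolding FAP_def by (rule rep_cong, (rule rep_rules)+) simp

definition "CHKP qS qZ eS qG eG p0 a0 p1 b1 = Comp ADD [Comp VALID [Proj 0],
   Comp MULT [Comp MEM [Comp (FAP qS qZ eS qG eG p0 a0) [Proj 1], Proj 0],
              Comp MEM [Comp (FAP qS qZ eS qG eG p1 b1) [Proj 1], Proj 0]]]"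
definition "OUTP qS qZ eS qG eG p0 a0 = Comp MEM [Comp (FAP qS qZ eS qG eG p0 a0) [Proj 1], Proj 0]"
definition "FINAL qS qZ eS qG eG p0 a0 p1 b1 =
   Comp (OUTP qS qZ eS qG eG p0 a0) [Mu (CHKP qS qZ eS qG eG p0 a0 p1 b1), Proj 0]"

lemma final_prog:
  fixes X Y :: "nat set" and qS qZ eS qG eG p0 a0 p1 b1 :: nat
  defines "FA \<equiv> \<lambda>p a k. fc 0 (jctx qG 0 (progk qZ eS k) (ctxk qS qZ eS k)) eG (encl [p]) a"
  assumes ex: "\<And>k. \<exists>L. valid Y L \<and> (FA p0 a0 k \<in> facts L \<or> FA p1 b1 k \<in> facts L)"
    and sA: "\<And>k L. valid Y L \<Longrightarrow> FA p0 a0 k \<in> facts L \<Longrightarrow> chi X k = 0"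
    and sB: "\<And>k L. valid Y L \<Longrightarrow> FA p1 b1 k \<in> facts L \<Longrightarrow> chi X k = 1"
  shows "chi X \<in> K2_rel Y"
proof -
  let ?o = "Some \<circ> chi Y"
  define CF where "CF = (\<lambda>t k. (if valid Y (decl t) then 0 else 1) *
     1 + (if FA p0 a0 k \<in> facts (decl t) then 0 else 1) * (if FA p1 b1 k \<in> facts (decl t) then 0 else (1::nat)))"
  have rc: "rep ?o (CHKP qS qZ eS qG eG p0 a0 p1 b1) (\<lambda>xs. CF (arg xs 0) (arg xs 1))"
    unfolding CHKP_def CF_def FA_def by (rule rep_cong, (rule rep_rules)+) simp
  have ro: "rep ?o (OUTP qS qZ eS qG eG p0 a0) (\<lambda>xs. if FA p0 a0 (arg xs 1) \<in> facts (decl (arg xs 0)) then 0 else 1)"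
    unfolding OUTP_def FA_def by (rule rep_cong, (rule rep_rules)+) simp
  have CF0: "CF t k = 0 \<longleftrightarrow> valid Y (decl t) \<and> (FA p0 a0 k \<in> facts (decl t) \<or> FA p1 b1 k \<in> facts (decl t))" for t k
    unfolding CF_def by auto
  have main: "ev ?o (FINAL qS qZ eS qG eG p0 a0 p1 b1) [k] y \<longleftrightarrow> y = chi X k" for k y
  proof -
    obtain L where L: "valid Y L" "FA p0 a0 k \<in> facts L \<or> FA p1 b1 k \<in> facts L" using ex by blast
    have ex0: "\<exists>t. CF t k = 0" using L CF0[of "encl L" k] by auto
    define n0 where "n0 = (LEAST t. CF t k = 0)"
    have n0: "CF n0 k = 0" unfolding n0_def using ex0 by (rule LeastI_ex)
    have n0m: "m < n0 \<Longrightarrow> CF m k \<noteq> 0" for m unfolding n0_def using not_less_Least by blast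
    have mu: "ev ?o (Mu (CHKP qS qZ eS qG eG p0 a0 p1 b1)) [k] n \<longleftrightarrow> n = n0" for n
    proof -
      have "ev ?o (Mu (CHKP qS qZ eS qG eG p0 a0 p1 b1)) [k] n \<longleftrightarrow> CF n k = 0 \<and> (\<forall>m<n. CF m k \<noteq> 0)"
        using rep_Mu[OF rc] by simp
      also have "\<dots> \<longleftrightarrow> n = n0"
        using n0 n0m by (metis linorder_neqE_nat)
      finally show ?thesis .
    qed
    have outv: "(if FA p0 a0 k \<in> facts (decl n0) then 0 else 1) = chi X k"
    proof -
      from n0 have v: "valid Y (decl n0)" and m: "FA p0 a0 k \<in> facts (decl n0) \<or> FA p1 b1 k \<in> facts (decl n0)"
        using CF0 by auto
      show ?thesis
      proof (cases "FA p0 a0 k \<in> facts (decl n0)")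
        case True then show ?thesis using sA[OF v] by simp
      next
        case False then show ?thesis using m sB[OF v] by simp
      qed
    qed
    have "ev ?o (FINAL qS qZ eS qG eG p0 a0 p1 b1) [k] y \<longleftrightarrow>
       (\<exists>ys. list_all2 (\<lambda>g y. ev ?o g [k] y) [Mu (CHKP qS qZ eS qG eG p0 a0 p1 b1), Proj 0] ys \<and>
             ev ?o (OUTP qS qZ eS qG eG p0 a0) ys y)"
      unfolding FINAL_def by simp
    also have "\<dots> \<longleftrightarrow> ev ?o (OUTP qS qZ eS qG eG p0 a0) [n0, k] y"
      by (auto simp: list_all2_Cons1 mu)
    also have "\<dots> \<longleftrightarrow> y = chi X k"
      using ro outv by (simp add: rep_def)
    finally show ?thesis .
  qed
  have "Phi (encode (FINAL qS qZ eS qG eG p0 a0 p1 b1)) ?o n = Some (chi X n)" for n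
    using main[of n] unfolding Phi_def decode_encode by auto
  then show ?thesis unfolding K2_rel_def by blast
qed

definition jn :: "(nat \<Rightarrow> nat) \<Rightarrow> (nat \<Rightarrow> nat) \<Rightarrow> nat \<Rightarrow> nat" where
  "jn a b q = (if even q then a (q div 2) else b (q div 2))"

lemma pjoin_Some: "pjoin (Some \<circ> a) (Some \<circ> b) = Some \<circ> jn a b"
  by (auto simp: pjoin_def jn_def fun_eq_iff)

lemma rep_K2: "rep (Some \<circ> chi X) p F \<Longrightarrow> (\<lambda>n. F [n]) \<in> K2_rel X"
  unfolding K2_rel_def using rep_Phi by blast

lemma K2_app_rep: "rep (Some \<circ> jn a b) p F \<Longrightarrow> a 0 = encode p \<Longrightarrow> K2_app a b = Some (\<lambda>n. F [n])"
  unfolding K2_app_def Let_def pjoin_Some using rep_Phi[of "Some \<circ> jn a b" p F] by simp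

definition cst :: "nat \<Rightarrow> nat \<Rightarrow> nat" where "cst n = (\<lambda>_. n)"

lemma cst_K2: "cst n \<in> K2_rel X"
proof -
  have "(\<lambda>m. (\<lambda>_::nat list. n) [m]) \<in> K2_rel X" by (rule rep_K2[OF rep_konst])
  then show ?thesis by (simp add: cst_def)
qed

lemma cst_inj: "cst i = cst j \<longleftrightarrow> i = j"
  by (auto simp: cst_def fun_eq_iff)

definition "PSIG = Comp Succ [Comp Oracle [konst 1]]"
lemma K2_sig: "K2_app (cst (encode PSIG)) (cst n) = Some (cst (Suc n))"
proof -
  have "rep (Some \<circ> jn (cst (encode PSIG)) (cst n)) PSIG (\<lambda>xs. Suc n)"
    unfolding PSIG_def by (rule rep_cong, (rule rep_rules)+) (simp add: jn_def cst_def)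
  from K2_app_rep[OF this] show ?thesis by (simp add: cst_def)
qed

definition "PSW = Comp IFZ [Comp Oracle [konst 1], konst 1, Zero]"
lemma K2_sw: "K2_app (cst (encode PSW)) (cst 0) = Some (cst 1)"
  "K2_app (cst (encode PSW)) (cst 1) = Some (cst 0)"
proof -
  have "rep (Some \<circ> jn (cst (encode PSW)) (cst 0)) PSW (\<lambda>xs. 1)"
    unfolding PSW_def by (rule rep_cong, (rule rep_rules)+) (simp add: jn_def cst_def)
  from K2_app_rep[OF this] show "K2_app (cst (encode PSW)) (cst 0) = Some (cst 1)" by (simp add: cst_def)
  have "rep (Some \<circ> jn (cst (encode PSW)) (cst 1)) PSW (\<lambda>xs. 0)"
    unfolding PSW_def by (rule rep_cong, (rule rep_rules)+) (simp add: jn_def cst_def)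
  from K2_app_rep[OF this] show "K2_app (cst (encode PSW)) (cst 1) = Some (cst 0)" by (simp add: cst_def)
qed

definition "PGP = Comp Oracle [Comp Succ [Comp Succ [Comp ADD [Comp Oracle [konst 1], Comp Oracle [konst 1]]]]]"
definition Gf :: "nat set \<Rightarrow> nat \<Rightarrow> nat" where
  "Gf X = (\<lambda>k. if k = 0 then encode PGP else chi X (k - 1))"

lemma K2_G: "K2_app (Gf X) (cst n) = Some (cst (chi X n))"
proof -
  have "rep (Some \<circ> jn (Gf X) (cst n)) PGP (\<lambda>xs. chi X n)"
    unfolding PGP_def by (rule rep_cong, (rule rep_rules)+) (simp add: jn_def cst_def Gf_def)
  from K2_app_rep[OF this] show ?thesis by (simp add: cst_def Gf_def)
qed

lemma Gf_K2: "Gf X \<in> K2_rel X"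
proof -
  have "rep (Some \<circ> chi X) (PrimRec (konst (encode PGP)) (Comp Oracle [Proj 1])) (\<lambda>xs. Gf X (arg xs 0))"
    by (rule rep_cong[OF rep_PrimRec_gen[where H="\<lambda>n r. Gf X n"]], (rule rep_rules)+) (simp_all add: Gf_def)
  from rep_K2[OF this] show ?thesis by simp
qed

definition code_of :: "(nat \<Rightarrow> nat option) \<Rightarrow> nat" where
  "code_of g = (case g 0 of None \<Rightarrow> encode (Mu Succ) | Some e \<Rightarrow> e)"

lemma Phi_div: "Phi (encode (Mu Succ)) o' n = None"
  unfolding Phi_def decode_encode by (simp add: ev_Mu_iff)

lemma B_app_code: "B_app g h = Phi (code_of g) (pjoin g h)"
proof (cases "g 0")
  case None
  then have "B_app g h = (\<lambda>_. None)" by (simp add: B_app_def)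
  moreover have "Phi (code_of g) (pjoin g h) = (\<lambda>_. None)"
    using None Phi_div by (simp add: code_of_def fun_eq_iff del: encode.simps)
  ultimately show ?thesis by simp
next
  case (Some e)
  then show ?thesis by (simp add: B_app_def code_of_def)
qed

lemma not_map_le: "\<not> m1 \<subseteq>\<^sub>m m2 \<Longrightarrow> \<exists>p a. m1 p = Some a \<and> m2 p \<noteq> Some a"
  unfolding map_le_def by (metis domD)

lemma chi_cases: "chi X k = 0 \<or> chi X k = 1"
  by (simp add: chi_def)

lemma dir_only_if:
  assumes emb: "embedding_K2_B X Y f"
  shows "turing_le X Y"
proof -
  have inj: "inj_on f (K2_rel X)" and img: "f ` K2_rel X \<subseteq> B_rel Y"
    and app: "\<And>a a' c. a \<in> K2_rel X \<Longrightarrow> a' \<in> K2_rel X \<Longrightarrow> K2_app a a' = Some c \<Longrightarrow> B_app (f a) (f a') = f c"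
    using emb unfolding embedding_K2_B_def by auto
  define Fn where "Fn = (\<lambda>n. f (cst n))"
  define S where "S = f (cst (encode PSIG))"
  define Wf where "Wf = f (cst (encode PSW))"
  define GG where "GG = f (Gf X)"
  have Fsucc: "B_app S (Fn n) = Fn (Suc n)" for n
    unfolding S_def Fn_def by (rule app[OF cst_K2 cst_K2 K2_sig])
  have Fsw: "B_app Wf (Fn 0) = Fn 1" "B_app Wf (Fn 1) = Fn 0"
    unfolding Wf_def Fn_def by (rule app[OF cst_K2 cst_K2 K2_sw(1)], rule app[OF cst_K2 cst_K2 K2_sw(2)])
  have FG: "B_app GG (Fn n) = Fn (chi X n)" for n
    unfolding GG_def Fn_def by (rule app[OF Gf_K2 cst_K2 K2_G])
  have Finj: "Fn i = Fn j \<Longrightarrow> i = j" for i j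
    using inj cst_K2 unfolding Fn_def inj_on_def by (metis cst_inj)
  have n01: "\<not> Fn 0 \<subseteq>\<^sub>m Fn 1"
  proof
    assume "Fn 0 \<subseteq>\<^sub>m Fn 1"
    then have "Fn 1 \<subseteq>\<^sub>m Fn 0" using B_app_mono[of "Fn 0" "Fn 1" Wf] Fsw by simp
    then have "Fn 0 = Fn 1" using \<open>Fn 0 \<subseteq>\<^sub>m Fn 1\<close> by (metis map_le_antisym)
    then show False using Finj by force
  qed
  have n10: "\<not> Fn 1 \<subseteq>\<^sub>m Fn 0"
  proof
    assume "Fn 1 \<subseteq>\<^sub>m Fn 0"
    then have "Fn 0 \<subseteq>\<^sub>m Fn 1" using B_app_mono[of "Fn 1" "Fn 0" Wf] Fsw by simp
    then have "Fn 0 = Fn 1" using \<open>Fn 1 \<subseteq>\<^sub>m Fn 0\<close> by (metis map_le_antisym)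
    then show False using Finj by force
  qed
  obtain p0 a0 where pa: "Fn 0 p0 = Some a0" "Fn 1 p0 \<noteq> Some a0" using not_map_le[OF n01] by blast
  obtain p1 b1 where pb: "Fn 1 p1 = Some b1" "Fn 0 p1 \<noteq> Some b1" using not_map_le[OF n10] by blast
  have inB: "a \<in> K2_rel X \<Longrightarrow> \<exists>q. Phi q (Some \<circ> chi Y) = f a" for a
    using img unfolding B_rel_def by blast
  obtain qS where qS: "Phi qS (Some \<circ> chi Y) = S" using inB[OF cst_K2] unfolding S_def by blast
  obtain qZ where qZ: "Phi qZ (Some \<circ> chi Y) = Fn 0" using inB[OF cst_K2] unfolding Fn_def by blast
  obtain qG where qG: "Phi qG (Some \<circ> chi Y) = GG" using inB[OF Gf_K2] unfolding GG_def by blast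
  define eS where "eS = code_of S"
  define eG where "eG = code_of GG"
  have Fctx: "Phi (progk qZ eS n) (orc Y (ctxk qS qZ eS n)) = Fn n" for n
  proof (induction n)
    case 0
    have "progk qZ eS 0 = qZ" "ctxk qS qZ eS 0 = 0" by (simp_all add: progk_def)
    then show ?case using qZ by (simp only: orc_0)
  next
    case (Suc n)
    have "ctxk qS qZ eS (Suc n) = jctx qS 0 (progk qZ eS n) (ctxk qS qZ eS n)"
      by (simp add: progk_def)
    then have "orc Y (ctxk qS qZ eS (Suc n)) = pjoin S (Fn n)"
      using Suc qS by (simp add: orc_jctx orc_0)
    then show ?case using Fsucc[of n] by (simp add: progk_def B_app_code eS_def)
  qed
  define Ck where "Ck = (\<lambda>k. jctx qG 0 (progk qZ eS k) (ctxk qS qZ eS k))"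
  have TK: "Phi eG (orc Y (Ck k)) = Fn (chi X k)" for k
    unfolding Ck_def orc_jctx orc_0 qG Fctx eG_def using FG[of k] by (simp add: B_app_code)
  have evA: "ev (orc Y (Ck k)) (decode eG) [p0] a0 \<longleftrightarrow> chi X k = 0" for k
    using TK[of k] pa chi_cases[of X k] by (auto simp: Phi_Some[symmetric])
  have evB: "ev (orc Y (Ck k)) (decode eG) [p1] b1 \<longleftrightarrow> chi X k = 1" for k
    using TK[of k] pb chi_cases[of X k] by (auto simp: Phi_Some[symmetric])
  have "chi X \<in> K2_rel Y"
  proof (rule final_prog[where qS=qS and qZ=qZ and eS=eS and qG=qG and eG=eG and ?p0.0=p0 and ?a0.0=a0 and ?p1.0=p1 and ?b1.0=b1])
    fix k
    show "\<exists>L. valid Y L \<and> (fc 0 (jctx qG 0 (progk qZ eS k) (ctxk qS qZ eS k)) eG (encl [p0]) a0 \<in> facts L \<or>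
                           fc 0 (jctx qG 0 (progk qZ eS k) (ctxk qS qZ eS k)) eG (encl [p1]) b1 \<in> facts L)"
    proof (cases "chi X k = 0")
      case True
      then have "ev (orc Y (Ck k)) (decode eG) [p0] a0" using evA by simp
      from complete[OF this refl] show ?thesis unfolding Ck_def by blast
    next
      case False
      then have "chi X k = 1" using chi_cases[of X k] by simp
      then have "ev (orc Y (Ck k)) (decode eG) [p1] b1" using evB by simp
      from complete[OF this refl] show ?thesis unfolding Ck_def by blast
    qed
  next
    fix k L
    assume "valid Y L" "fc 0 (jctx qG 0 (progk qZ eS k) (ctxk qS qZ eS k)) eG (encl [p0]) a0 \<in> facts L"
    from sound[OF this] have "ev (orc Y (Ck k)) (decode eG) [p0] a0"
      by (simp add: semc_def Ck_def)
    then show "chi X k = 0" using evA by simp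
  next
    fix k L
    assume "valid Y L" "fc 0 (jctx qG 0 (progk qZ eS k) (ctxk qS qZ eS k)) eG (encl [p1]) b1 \<in> facts L"
    from sound[OF this] have "ev (orc Y (Ck k)) (decode eG) [p1] b1"
      by (simp add: semc_def Ck_def)
    then show "chi X k = 1" using evB by simp
  qed
  then show ?thesis unfolding turing_le_def .
qed

theorem theorem6p13:
  fixes X Y :: "nat set"
  shows "(\<exists>f. embedding_K2_B X Y f) \<longleftrightarrow> turing_le X Y"
  using dir_only_if dir_if by blast

end
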